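(* Let $\mathcal{I}$ be an interval hypergraph on $[n]$ containing all singletons. Then $P_{\mathcal{I}}$ is a distributive lattice if and only if $P_{\mathcal{I}}$ is isomorphic to a Cartesian product of chains.
   Context: An interval hypergraph on $[n]$ is a collection of intervals of $[n]$, by convention containing all singletons. An orientation is a map $O:\mathcal{I}\to[n]$ with $O(I)\in I$; it is acyclic if there are no $H_1,\dots,H_k$, $k\ge2$, with $O(H_{i+1})\in H_i\setminus\{O(H_i)\}$ for $i\in[k-1]$ and $O(H_1)\in H_k\setminus\{O(H_k)\}$. Orientations $O\ne O'$ are related by an increasing flip (from $O$ to $O'$) if there exist $1\le i<j\le n$ such that for all $H$: if $O(H)\ne O'(H)$ then $O(H)=i$, $O'(H)=j$; and if $\{i,j\}\subseteq H$ then $O(H)=i\iff O'(H)=j$. $P_{\mathcal{I}}$ is the transitive closure of the increasing flip relation on the acyclic orientations of $\mathcal{I}$. *)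

theory Defs
  imports Main "HOL-Library.FuncSet"
begin

definition interval_hypergraph :: "nat \<Rightarrow> nat set set \<Rightarrow> bool" where
  "interval_hypergraph n I \<longleftrightarrow>
     (\<forall>H\<in>I. \<exists>a b. 1 \<le> a \<and> a \<le> b \<and> b \<le> n \<and> H = {a..b}) \<and>
     (\<forall>i\<in>{1..n}. {i} \<in> I)"

text \<open>Orientations: maps Or with Or H \<in> H for H \<in> I; outside I they are fixed
  to undefined so that an orientation is determined by its values on I.\<close>
definition orientation :: "nat set set \<Rightarrow> (nat set \<Rightarrow> nat) \<Rightarrow> bool" where
  "orientation I Or \<longleftrightarrow> (\<forall>H\<in>I. Or H \<in> H) \<and> (\<forall>H. H \<notin> I \<longrightarrow> Or H = undefined)"

definition acyclic_orientation :: "nat set set \<Rightarrow> (nat set \<Rightarrow> nat) \<Rightarrow> bool" where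
  "acyclic_orientation I Or \<longleftrightarrow> orientation I Or \<and>
     \<not> (\<exists>(k::nat) (Hs :: nat \<Rightarrow> nat set). k \<ge> 2 \<and> (\<forall>i\<in>{1..k}. Hs i \<in> I) \<and>
          (\<forall>i\<in>{1..k-1}. Or (Hs (i+1)) \<in> Hs i - {Or (Hs i)}) \<and>
          Or (Hs 1) \<in> Hs k - {Or (Hs k)})"

definition increasing_flip ::
  "nat \<Rightarrow> nat set set \<Rightarrow> (nat set \<Rightarrow> nat) \<Rightarrow> (nat set \<Rightarrow> nat) \<Rightarrow> bool" where
  "increasing_flip n I Or Q \<longleftrightarrow> Or \<noteq> Q \<and>
     (\<exists>i j. 1 \<le> i \<and> i < j \<and> j \<le> n \<and>
       (\<forall>H\<in>I. (Or H \<noteq> Q H \<longrightarrow> Or H = i \<and> Q H = j) \<and>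
               ({i, j} \<subseteq> H \<longrightarrow> (Or H = i \<longleftrightarrow> Q H = j))))"

definition P_carrier :: "nat set set \<Rightarrow> (nat set \<Rightarrow> nat) set" where
  "P_carrier I = {Or. acyclic_orientation I Or}"

definition flip_rel :: "nat \<Rightarrow> nat set set \<Rightarrow> ((nat set \<Rightarrow> nat) \<times> (nat set \<Rightarrow> nat)) set" where
  "flip_rel n I = {(Or, Q). acyclic_orientation I Or \<and> acyclic_orientation I Q \<and>
                            increasing_flip n I Or Q}"

definition P_le :: "nat \<Rightarrow> nat set set \<Rightarrow> (nat set \<Rightarrow> nat) \<Rightarrow> (nat set \<Rightarrow> nat) \<Rightarrow> bool" where
  "P_le n I Or Q \<longleftrightarrow> Or \<in> P_carrier I \<and> Q \<in> P_carrier I \<and> (Or, Q) \<in> (flip_rel n I)\<^sup>*"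

definition partial_order_on' :: "'a set \<Rightarrow> ('a \<Rightarrow> 'a \<Rightarrow> bool) \<Rightarrow> bool" where
  "partial_order_on' A le \<longleftrightarrow>
     (\<forall>x\<in>A. le x x) \<and>
     (\<forall>x\<in>A. \<forall>y\<in>A. le x y \<and> le y x \<longrightarrow> x = y) \<and>
     (\<forall>x\<in>A. \<forall>y\<in>A. \<forall>z\<in>A. le x y \<and> le y z \<longrightarrow> le x z)"

definition chain_on :: "'a set \<Rightarrow> ('a \<Rightarrow> 'a \<Rightarrow> bool) \<Rightarrow> bool" where
  "chain_on A le \<longleftrightarrow> partial_order_on' A le \<and> (\<forall>x\<in>A. \<forall>y\<in>A. le x y \<or> le y x)"

definition is_lub :: "'a set \<Rightarrow> ('a \<Rightarrow> 'a \<Rightarrow> bool) \<Rightarrow> 'a \<Rightarrow> 'a \<Rightarrow> 'a \<Rightarrow> bool" where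
  "is_lub A le x y s \<longleftrightarrow> s \<in> A \<and> le x s \<and> le y s \<and>
     (\<forall>u\<in>A. le x u \<and> le y u \<longrightarrow> le s u)"

definition is_glb :: "'a set \<Rightarrow> ('a \<Rightarrow> 'a \<Rightarrow> bool) \<Rightarrow> 'a \<Rightarrow> 'a \<Rightarrow> 'a \<Rightarrow> bool" where
  "is_glb A le x y m \<longleftrightarrow> m \<in> A \<and> le m x \<and> le m y \<and>
     (\<forall>u\<in>A. le u x \<and> le u y \<longrightarrow> le u m)"

definition lattice_on :: "'a set \<Rightarrow> ('a \<Rightarrow> 'a \<Rightarrow> bool) \<Rightarrow> bool" where
  "lattice_on A le \<longleftrightarrow> partial_order_on' A le \<and>
     (\<forall>x\<in>A. \<forall>y\<in>A. (\<exists>s. is_lub A le x y s) \<and> (\<exists>m. is_glb A le x y m))"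

definition join_on :: "'a set \<Rightarrow> ('a \<Rightarrow> 'a \<Rightarrow> bool) \<Rightarrow> 'a \<Rightarrow> 'a \<Rightarrow> 'a" where
  "join_on A le x y = (THE s. is_lub A le x y s)"

definition meet_on :: "'a set \<Rightarrow> ('a \<Rightarrow> 'a \<Rightarrow> bool) \<Rightarrow> 'a \<Rightarrow> 'a \<Rightarrow> 'a" where
  "meet_on A le x y = (THE m. is_glb A le x y m)"

definition distributive_lattice_on :: "'a set \<Rightarrow> ('a \<Rightarrow> 'a \<Rightarrow> bool) \<Rightarrow> bool" where
  "distributive_lattice_on A le \<longleftrightarrow> lattice_on A le \<and>
     (\<forall>x\<in>A. \<forall>y\<in>A. \<forall>z\<in>A.
        meet_on A le x (join_on A le y z) =
        join_on A le (meet_on A le x y) (meet_on A le x z))"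

definition iso_product_of_chains :: "'a set \<Rightarrow> ('a \<Rightarrow> 'a \<Rightarrow> bool) \<Rightarrow> bool" where
  "iso_product_of_chains A le \<longleftrightarrow>
     (\<exists>(J :: nat set) (C :: nat \<Rightarrow> nat set) (R :: nat \<Rightarrow> nat \<Rightarrow> nat \<Rightarrow> bool) f.
        finite J \<and> (\<forall>j\<in>J. chain_on (C j) (R j)) \<and>
        bij_betw f A (Pi\<^sub>E J C) \<and>
        (\<forall>x\<in>A. \<forall>y\<in>A. le x y \<longleftrightarrow> (\<forall>j\<in>J. R j (f x j) (f y j))))"

end

theory Submission
  imports Defs
begin

lemma ih_interval:
  assumes "interval_hypergraph n I" "H \<in> I"
  obtains a b where "1 \<le> a" "a \<le> b" "b \<le> n" "H = {a..b}"
  using assms unfolding interval_hypergraph_def by blast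

definition twocyc :: "(nat set \<Rightarrow> nat) \<Rightarrow> nat set \<Rightarrow> nat set \<Rightarrow> bool" where
  "twocyc Or H K \<longleftrightarrow> Or K \<in> H - {Or H} \<and> Or H \<in> K - {Or K}"

lemma cycle_shorten:
  fixes Or :: "nat set \<Rightarrow> nat"
  assumes ih: "interval_hypergraph n I"
    and ori: "\<forall>H\<in>I. Or H \<in> H"
  shows "k \<ge> 2 \<Longrightarrow> (\<forall>i<k. f i \<in> I) \<Longrightarrow> (\<forall>i<k. Or (f (Suc i mod k)) \<in> f i - {Or (f i)})
         \<Longrightarrow> \<exists>H\<in>I. \<exists>K\<in>I. twocyc Or H K"
proof (induction k arbitrary: f rule: less_induct)
  case (less k)
  show ?case
  proof (cases "k = 2")
    case True
    then show ?thesis using less.prems unfolding twocyc_def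
      by (metis One_nat_def Suc_1 lessI mod_self mod_less zero_less_Suc)
  next
    case False
    hence k3: "k \<ge> 3" using less.prems(1) by simp
    define S where "S = (\<lambda>i. Or (f i)) ` {..<k}"
    have "finite S" unfolding S_def by auto
    have "S \<noteq> {}" using k3 unfolding S_def by (metis emptyE image_eqI lessThan_iff zero_less_iff_neq_zero not_numeral_le_zero)
    hence "Max S \<in> S" using \<open>finite S\<close> by simp
    then obtain m where m: "m < k" "Or (f m) = Max S" unfolding S_def by auto
    have mx: "\<forall>i<k. Or (f i) \<le> Or (f m)"
      using m \<open>finite S\<close> unfolding S_def by auto
    define g where "g = (\<lambda>i. f ((i + m + 1) mod k))"
    have gI: "\<forall>i<k. g i \<in> I" using less.prems(2) k3 unfolding g_def by auto
    have gmx: "\<forall>i<k. Or (g i) \<le> Or (g (k - 1))"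
    proof -
      have "g (k - 1) = f m" unfolding g_def using m k3
        by (metis Suc_diff_1 add.commute add_Suc_right bot_nat_0.not_eq_extremum diff_is_0_eq'
             le_add_diff_inverse less_one mod_add_self1 mod_less nat_le_linear not_add_less1 plus_1_eq_Suc)
      thus ?thesis using mx less.prems(2) unfolding g_def using k3 by auto
    qed
    have gst: "\<forall>i<k. Or (g (Suc i mod k)) \<in> g i - {Or (g i)}"
    proof (intro allI impI)
      fix i assume "i < k"
      have "(i + m + 1) mod k < k" using k3 by auto
      hence "Or (f (Suc ((i + m + 1) mod k) mod k)) \<in> f ((i + m + 1) mod k) - {Or (f ((i + m + 1) mod k))}"
        using less.prems(3) by blast
      moreover have "Suc ((i + m + 1) mod k) mod k = (Suc i mod k + m + 1) mod k"
        by (metis add_Suc mod_Suc_eq mod_add_left_eq)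
      ultimately show "Or (g (Suc i mod k)) \<in> g i - {Or (g i)}" unfolding g_def by simp
    qed
    define p where "p = g (k - 2)"
    define q where "q = g (k - 1)"
    define r where "r = g 0"
    have pI: "p \<in> I" and qI: "q \<in> I" and rI: "r \<in> I" using gI k3 unfolding p_def q_def r_def by auto
    have pq: "Or q \<in> p - {Or p}"
      using gst[rule_format, of "k - 2"] k3 unfolding p_def q_def
      by (metis Suc_diff_Suc diff_less less_le_trans mod_less numeral_2_eq_2 zero_less_numeral lessI
           le_add_diff_inverse2 One_nat_def Suc_1 Suc_leD diff_Suc_1 less_Suc_eq_le numeral_3_eq_3)
    have qr: "Or r \<in> q - {Or q}"
      using gst[rule_format, of "k - 1"] k3 unfolding q_def r_def by auto
    have vp: "Or p \<le> Or q" and vr: "Or r \<le> Or q" using gmx k3 unfolding p_def q_def r_def by auto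
    obtain a1 b1 where p_iv: "p = {a1..b1}" using ih_interval[OF ih pI] by metis
    obtain a2 b2 where q_iv: "q = {a2..b2}" using ih_interval[OF ih qI] by metis
    have Op: "Or p \<in> p" and Oq: "Or q \<in> q" and Or: "Or r \<in> r" using ori pI qI rI by auto
    show ?thesis
    proof (cases "Or r \<le> Or p")
      case True
      hence "Or p \<in> q - {Or q}" using qr Oq pq vp q_iv by auto
      hence "twocyc Or p q" using pq unfolding twocyc_def by simp
      thus ?thesis using pI qI by blast
    next
      case False
      hence pr: "Or r \<in> p - {Or p}" using pq Op vr p_iv by auto
      define h where "h = g"
      have "\<exists>H\<in>I. \<exists>K\<in>I. twocyc Or H K"
      proof (rule less.IH[of "k - 1" g])
        show "k - 1 < k" "2 \<le> k - 1" using k3 by auto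
        show "\<forall>i<k - 1. g i \<in> I" using gI by auto
        show "\<forall>i<k - 1. Or (g (Suc i mod (k - 1))) \<in> g i - {Or (g i)}"
        proof (intro allI impI)
          fix i assume i: "i < k - 1"
          show "Or (g (Suc i mod (k - 1))) \<in> g i - {Or (g i)}"
          proof (cases "Suc i < k - 1")
            case True
            then show ?thesis using gst[rule_format, of i] i by auto
          next
            case False
            hence ik: "Suc i = k - 1" using i by auto
            hence "i = k - 2" "Suc i mod (k - 1) = 0" by auto
            then show ?thesis using pr unfolding p_def r_def by simp
          qed
        qed
      qed
      thus ?thesis .
    qed
  qed
qed

lemma acyclic_iff_no_twocyc:
  assumes ih: "interval_hypergraph n I" and ori: "orientation I Or"
  shows "acyclic_orientation I Or \<longleftrightarrow> (\<forall>H\<in>I. \<forall>K\<in>I. \<not> twocyc Or H K)"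
proof
  assume ac: "acyclic_orientation I Or"
  show "\<forall>H\<in>I. \<forall>K\<in>I. \<not> twocyc Or H K"
  proof (intro ballI notI)
    fix H K assume HK: "H \<in> I" "K \<in> I" "twocyc Or H K"
    define Hs where "Hs = (\<lambda>i::nat. if i = 1 then H else K)"
    have "2 \<ge> (2::nat) \<and> (\<forall>i\<in>{1..2}. Hs i \<in> I) \<and>
          (\<forall>i\<in>{1..2-1}. Or (Hs (i+1)) \<in> Hs i - {Or (Hs i)}) \<and> Or (Hs 1) \<in> Hs 2 - {Or (Hs 2)}"
      using HK unfolding Hs_def twocyc_def by auto
    thus False using ac unfolding acyclic_orientation_def by blast
  qed
next
  assume no: "\<forall>H\<in>I. \<forall>K\<in>I. \<not> twocyc Or H K"
  show "acyclic_orientation I Or"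
    unfolding acyclic_orientation_def
  proof (intro conjI notI)
    show "orientation I Or" by fact
    assume "\<exists>(k::nat) Hs. 2 \<le> k \<and> (\<forall>i\<in>{1..k}. Hs i \<in> I) \<and>
       (\<forall>i\<in>{1..k - 1}. Or (Hs (i + 1)) \<in> Hs i - {Or (Hs i)}) \<and> Or (Hs 1) \<in> Hs k - {Or (Hs k)}"
    then obtain k :: nat and Hs where k: "2 \<le> k" and HsI: "\<forall>i\<in>{1..k}. Hs i \<in> I"
      and st: "\<forall>i\<in>{1..k - 1}. Or (Hs (i + 1)) \<in> Hs i - {Or (Hs i)}"
      and cl: "Or (Hs 1) \<in> Hs k - {Or (Hs k)}" by blast
    define f where "f = (\<lambda>i. Hs (i + 1))"
    have "\<exists>H\<in>I. \<exists>K\<in>I. twocyc Or H K"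
    proof (rule cycle_shorten[OF ih _ k])
      show "\<forall>H\<in>I. Or H \<in> H" using ori unfolding orientation_def by blast
      show "\<forall>i<k. f i \<in> I" using HsI unfolding f_def by auto
      show "\<forall>i<k. Or (f (Suc i mod k)) \<in> f i - {Or (f i)}"
      proof (intro allI impI)
        fix i assume i: "i < k"
        show "Or (f (Suc i mod k)) \<in> f i - {Or (f i)}"
        proof (cases "Suc i < k")
          case True
          thus ?thesis using st[rule_format, of "i+1"] unfolding f_def by auto
        next
          case False
          hence ik: "Suc i = k" using i by auto
          hence "i = k - 1" "Suc i mod k = 0" by auto
          thus ?thesis using cl k unfolding f_def by auto
        qed
      qed
    qed
    thus False using no by blast
  qed
qed


lemma orientation_eqI:
  assumes "orientation I O1" "orientation I O2" "\<forall>H\<in>I. O1 H = O2 H"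
  shows "O1 = O2"
  using assms unfolding orientation_def by (metis ext)

lemma flip_mono:
  assumes "increasing_flip n I O1 O2" "H \<in> I"
  shows "O1 H \<le> O2 H"
  using assms unfolding increasing_flip_def by (metis less_or_eq_imp_le)

lemma P_le_pw_aux:
  assumes "(O1, O2) \<in> (flip_rel n I)\<^sup>*"
  shows "\<forall>H\<in>I. O1 H \<le> O2 H"
  using assms
proof (induction rule: rtrancl_induct)
  case base
  then show ?case by simp
next
  case (step y z)
  then show ?case using flip_mono unfolding flip_rel_def by (metis (mono_tags, lifting) case_prodD mem_Collect_eq order_trans)
qed

lemma P_le_pw:
  assumes "P_le n I O1 O2"
  shows "acyclic_orientation I O1" "acyclic_orientation I O2" "\<forall>H\<in>I. O1 H \<le> O2 H"
  using assms P_le_pw_aux unfolding P_le_def P_carrier_def by auto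

lemma flip_step:
  assumes "acyclic_orientation I O1" "acyclic_orientation I O2" "increasing_flip n I O1 O2"
  shows "P_le n I O1 O2"
  using assms unfolding P_le_def P_carrier_def flip_rel_def by auto

lemma P_le_refl:
  assumes "acyclic_orientation I O1"
  shows "P_le n I O1 O1"
  using assms unfolding P_le_def P_carrier_def by auto

lemma P_le_trans:
  assumes "P_le n I O1 O2" "P_le n I O2 O3"
  shows "P_le n I O1 O3"
  using assms unfolding P_le_def by auto

lemma prod_chains_distrib:
  fixes A :: "'a set" and le :: "'a \<Rightarrow> 'a \<Rightarrow> bool"
  assumes "iso_product_of_chains A le"
  shows "distributive_lattice_on A le"
proof -
  from assms obtain J :: "nat set" and C :: "nat \<Rightarrow> nat set" and R f where
    fin: "finite J" and ch: "\<forall>j\<in>J. chain_on (C j) (R j)" and bij: "bij_betw f A (Pi\<^sub>E J C)"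
    and iso: "\<forall>x\<in>A. \<forall>y\<in>A. le x y \<longleftrightarrow> (\<forall>j\<in>J. R j (f x j) (f y j))"
    unfolding iso_product_of_chains_def by blast
  have refl: "\<And>j a. j \<in> J \<Longrightarrow> a \<in> C j \<Longrightarrow> R j a a"
    using ch unfolding chain_on_def partial_order_on'_def by blast
  have antis: "\<And>j a b. j \<in> J \<Longrightarrow> a \<in> C j \<Longrightarrow> b \<in> C j \<Longrightarrow> R j a b \<Longrightarrow> R j b a \<Longrightarrow> a = b"
    using ch unfolding chain_on_def partial_order_on'_def by blast
  have trans: "\<And>j a b c. j \<in> J \<Longrightarrow> a \<in> C j \<Longrightarrow> b \<in> C j \<Longrightarrow> c \<in> C j \<Longrightarrow> R j a b \<Longrightarrow> R j b c \<Longrightarrow> R j a c"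
    using ch unfolding chain_on_def partial_order_on'_def by blast
  have tot: "\<And>j a b. j \<in> J \<Longrightarrow> a \<in> C j \<Longrightarrow> b \<in> C j \<Longrightarrow> R j a b \<or> R j b a"
    using ch unfolding chain_on_def by blast
  have fA: "\<And>x. x \<in> A \<Longrightarrow> f x \<in> Pi\<^sub>E J C" using bij bij_betwE by blast
  have fC: "\<And>x j. x \<in> A \<Longrightarrow> j \<in> J \<Longrightarrow> f x j \<in> C j" using fA by blast
  have inj: "\<And>x y. x \<in> A \<Longrightarrow> y \<in> A \<Longrightarrow> (\<forall>j\<in>J. f x j = f y j) \<Longrightarrow> x = y"
  proof -
    fix x y assume xy: "x \<in> A" "y \<in> A" "\<forall>j\<in>J. f x j = f y j"
    have "f x = f y"
    proof
      fix j show "f x j = f y j"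
      proof (cases "j \<in> J")
        case True thus ?thesis using xy(3) by simp
      next
        case False thus ?thesis using PiE_arb[OF fA[OF xy(1)] False] PiE_arb[OF fA[OF xy(2)] False] by simp
      qed
    qed
    thus "x = y" using bij_betw_imp_inj_on[OF bij] xy(1,2) by (simp add: inj_on_eq_iff)
  qed
  have fim: "f ` A = Pi\<^sub>E J C" using bij_betw_imp_surj_on[OF bij] .
  have surj: "\<And>g. g \<in> Pi\<^sub>E J C \<Longrightarrow> \<exists>x\<in>A. f x = g" unfolding fim[symmetric] by blast
  define mx where "mx = (\<lambda>j a b. if R j a b then b else a)"
  define mn where "mn = (\<lambda>j a b. if R j a b then a else b)"
  have mxC: "\<And>j a b. a \<in> C j \<Longrightarrow> b \<in> C j \<Longrightarrow> mx j a b \<in> C j" unfolding mx_def by auto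
  have mnC: "\<And>j a b. a \<in> C j \<Longrightarrow> b \<in> C j \<Longrightarrow> mn j a b \<in> C j" unfolding mn_def by auto
  have po: "partial_order_on' A le"
    unfolding partial_order_on'_def
  proof (intro conjI ballI impI)
    fix x assume x: "x \<in> A"
    have "\<forall>j\<in>J. R j (f x j) (f x j)" using refl fC x by blast
    thus "le x x" using iso x by blast
  next
    fix x y assume xy: "x \<in> A" "y \<in> A" "le x y \<and> le y x"
    have "\<forall>j\<in>J. R j (f x j) (f y j) \<and> R j (f y j) (f x j)" using iso xy by blast
    hence "\<forall>j\<in>J. f x j = f y j" using antis fC xy(1,2) by blast
    thus "x = y" using inj xy(1,2) by blast
  next
    fix x y z assume xyz: "x \<in> A" "y \<in> A" "z \<in> A" "le x y \<and> le y z"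
    have "\<forall>j\<in>J. R j (f x j) (f y j) \<and> R j (f y j) (f z j)" using iso xyz by blast
    hence "\<forall>j\<in>J. R j (f x j) (f z j)" using trans fC xyz(1,2,3) by blast
    thus "le x z" using iso xyz by blast
  qed
  have antiA: "\<And>s t. s \<in> A \<Longrightarrow> t \<in> A \<Longrightarrow> le s t \<Longrightarrow> le t s \<Longrightarrow> s = t"
    using po unfolding partial_order_on'_def by blast
  have lub_uniq: "\<And>x y s t. is_lub A le x y s \<Longrightarrow> is_lub A le x y t \<Longrightarrow> s = t"
  proof -
    fix x y s t assume st: "is_lub A le x y s" "is_lub A le x y t"
    have "s \<in> A" "t \<in> A" "le s t" "le t s" using st unfolding is_lub_def by auto
    thus "s = t" using antiA by blast
  qed
  have glb_uniq: "\<And>x y s t. is_glb A le x y s \<Longrightarrow> is_glb A le x y t \<Longrightarrow> s = t"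
  proof -
    fix x y s t assume st: "is_glb A le x y s" "is_glb A le x y t"
    have "s \<in> A" "t \<in> A" "le s t" "le t s" using st unfolding is_glb_def by auto
    thus "s = t" using antiA by blast
  qed
  have join_ex: "\<And>x y. x \<in> A \<Longrightarrow> y \<in> A \<Longrightarrow> \<exists>s\<in>A. is_lub A le x y s \<and> (\<forall>j\<in>J. f s j = mx j (f x j) (f y j))"
  proof -
    fix x y assume xy: "x \<in> A" "y \<in> A"
    have "(\<lambda>j\<in>J. mx j (f x j) (f y j)) \<in> Pi\<^sub>E J C" using mxC fC xy by auto
    then obtain s where s: "s \<in> A" "f s = (\<lambda>j\<in>J. mx j (f x j) (f y j))" using surj by blast
    have "is_lub A le x y s"
      unfolding is_lub_def
    proof (intro conjI ballI impI)
      show "s \<in> A" by fact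
      have "\<forall>j\<in>J. R j (f x j) (f s j)"
      proof
        fix j assume j: "j \<in> J"
        show "R j (f x j) (f s j)" using s(2) j refl[OF j fC[OF xy(1) j]] unfolding mx_def by simp
      qed
      thus "le x s" using iso xy s(1) by blast
      have "\<forall>j\<in>J. R j (f y j) (f s j)"
      proof
        fix j assume j: "j \<in> J"
        show "R j (f y j) (f s j)" using s(2) j refl[OF j fC[OF xy(2) j]] tot[OF j fC[OF xy(1) j] fC[OF xy(2) j]] unfolding mx_def by auto
      qed
      thus "le y s" using iso xy s(1) by blast
      fix u assume u: "u \<in> A" "le x u \<and> le y u"
      have "\<forall>j\<in>J. R j (f x j) (f u j) \<and> R j (f y j) (f u j)" using iso xy u by blast
      hence "\<forall>j\<in>J. R j (f s j) (f u j)" using s(2) unfolding mx_def by simp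
      thus "le s u" using iso s(1) u(1) by blast
    qed
    thus "\<exists>s\<in>A. is_lub A le x y s \<and> (\<forall>j\<in>J. f s j = mx j (f x j) (f y j))" using s by auto
  qed
  have meet_ex: "\<And>x y. x \<in> A \<Longrightarrow> y \<in> A \<Longrightarrow> \<exists>s\<in>A. is_glb A le x y s \<and> (\<forall>j\<in>J. f s j = mn j (f x j) (f y j))"
  proof -
    fix x y assume xy: "x \<in> A" "y \<in> A"
    have "(\<lambda>j\<in>J. mn j (f x j) (f y j)) \<in> Pi\<^sub>E J C" using mnC fC xy by auto
    then obtain s where s: "s \<in> A" "f s = (\<lambda>j\<in>J. mn j (f x j) (f y j))" using surj by blast
    have "is_glb A le x y s"
      unfolding is_glb_def
    proof (intro conjI ballI impI)
      show "s \<in> A" by fact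
      have "\<forall>j\<in>J. R j (f s j) (f x j)"
      proof
        fix j assume j: "j \<in> J"
        show "R j (f s j) (f x j)" using s(2) j refl[OF j fC[OF xy(1) j]] tot[OF j fC[OF xy(1) j] fC[OF xy(2) j]] unfolding mn_def by auto
      qed
      thus "le s x" using iso xy s(1) by blast
      have "\<forall>j\<in>J. R j (f s j) (f y j)"
      proof
        fix j assume j: "j \<in> J"
        show "R j (f s j) (f y j)" using s(2) j refl[OF j fC[OF xy(2) j]] unfolding mn_def by auto
      qed
      thus "le s y" using iso xy s(1) by blast
      fix u assume u: "u \<in> A" "le u x \<and> le u y"
      have "\<forall>j\<in>J. R j (f u j) (f x j) \<and> R j (f u j) (f y j)" using iso xy u by blast
      hence "\<forall>j\<in>J. R j (f u j) (f s j)" using s(2) unfolding mn_def by simp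
      thus "le u s" using iso s(1) u(1) by blast
    qed
    thus "\<exists>s\<in>A. is_glb A le x y s \<and> (\<forall>j\<in>J. f s j = mn j (f x j) (f y j))" using s by auto
  qed
  have join_eq: "\<And>x y. x \<in> A \<Longrightarrow> y \<in> A \<Longrightarrow> join_on A le x y \<in> A \<and> (\<forall>j\<in>J. f (join_on A le x y) j = mx j (f x j) (f y j))"
  proof -
    fix x y assume xy: "x \<in> A" "y \<in> A"
    obtain s where s: "s \<in> A" "is_lub A le x y s" "\<forall>j\<in>J. f s j = mx j (f x j) (f y j)" using join_ex[OF xy] by blast
    have "join_on A le x y = s" unfolding join_on_def using s lub_uniq by (intro the_equality) auto
    thus "join_on A le x y \<in> A \<and> (\<forall>j\<in>J. f (join_on A le x y) j = mx j (f x j) (f y j))" using s by simp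
  qed
  have meet_eq: "\<And>x y. x \<in> A \<Longrightarrow> y \<in> A \<Longrightarrow> meet_on A le x y \<in> A \<and> (\<forall>j\<in>J. f (meet_on A le x y) j = mn j (f x j) (f y j))"
  proof -
    fix x y assume xy: "x \<in> A" "y \<in> A"
    obtain s where s: "s \<in> A" "is_glb A le x y s" "\<forall>j\<in>J. f s j = mn j (f x j) (f y j)" using meet_ex[OF xy] by blast
    have "meet_on A le x y = s" unfolding meet_on_def using s glb_uniq by (intro the_equality) auto
    thus "meet_on A le x y \<in> A \<and> (\<forall>j\<in>J. f (meet_on A le x y) j = mn j (f x j) (f y j))" using s by simp
  qed
  have chain_dist: "\<And>j a b c. j \<in> J \<Longrightarrow> a \<in> C j \<Longrightarrow> b \<in> C j \<Longrightarrow> c \<in> C j \<Longrightarrow>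
      mn j a (mx j b c) = mx j (mn j a b) (mn j a c)"
  proof -
    fix j a b c assume abc: "j \<in> J" "a \<in> C j" "b \<in> C j" "c \<in> C j"
    have T: "\<And>u v w. u \<in> C j \<Longrightarrow> v \<in> C j \<Longrightarrow> w \<in> C j \<Longrightarrow> R j u v \<Longrightarrow> R j v w \<Longrightarrow> R j u w"
      using trans abc(1) by blast
    have A': "\<And>u v. u \<in> C j \<Longrightarrow> v \<in> C j \<Longrightarrow> R j u v \<Longrightarrow> R j v u \<Longrightarrow> u = v"
      using antis abc(1) by blast
    have Tt: "\<And>u v. u \<in> C j \<Longrightarrow> v \<in> C j \<Longrightarrow> \<not> R j u v \<Longrightarrow> R j v u"
      using tot abc(1) by blast
    have Rf: "\<And>u. u \<in> C j \<Longrightarrow> R j u u" using refl abc(1) by blast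
    show "mn j a (mx j b c) = mx j (mn j a b) (mn j a c)"
    proof (cases "R j b c")
      case bc: True
      show ?thesis
      proof (cases "R j a b")
        case True
        hence "R j a c" using T abc bc by blast
        thus ?thesis using True bc Rf abc unfolding mn_def mx_def by simp
      next
        case False
        hence ba: "R j b a" using Tt abc by blast
        show ?thesis
        proof (cases "R j a c")
          case True thus ?thesis using False bc ba unfolding mn_def mx_def by simp
        next
          case False2: False
          hence "R j c a" using Tt abc by blast
          thus ?thesis using False False2 bc ba unfolding mn_def mx_def by simp
        qed
      qed
    next
      case nbc: False
      hence cb: "R j c b" using Tt abc by blast
      show ?thesis
      proof (cases "R j a c")
        case True
        hence "R j a b" using T abc cb by blast
        thus ?thesis using True nbc Rf abc unfolding mn_def mx_def by simp
      next
        case False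
        hence ca: "R j c a" using Tt abc by blast
        show ?thesis
        proof (cases "R j a b")
          case True
          have "\<not> R j a c" by fact
          thus ?thesis using True nbc ca Rf abc unfolding mn_def mx_def by simp
        next
          case False2: False
          hence "R j b a" using Tt abc by blast
          hence "R j c b \<and> \<not> R j b c" using cb nbc by simp
          thus ?thesis using False False2 nbc ca Rf abc unfolding mn_def mx_def by auto
        qed
      qed
    qed
  qed
  have lat: "lattice_on A le"
    unfolding lattice_on_def
  proof (intro conjI ballI)
    show "partial_order_on' A le" by fact
    fix x y assume xy: "x \<in> A" "y \<in> A"
    show "\<exists>s. is_lub A le x y s" using join_ex[OF xy] by blast
    show "\<exists>m. is_glb A le x y m" using meet_ex[OF xy] by blast
  qed
  show ?thesis
    unfolding distributive_lattice_on_def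
  proof (intro conjI ballI)
    show "lattice_on A le" by fact
    fix x y z assume xyz: "x \<in> A" "y \<in> A" "z \<in> A"
    let ?L = "meet_on A le x (join_on A le y z)"
    let ?R = "join_on A le (meet_on A le x y) (meet_on A le x z)"
    have j1: "join_on A le y z \<in> A" using join_eq xyz by blast
    have m1: "meet_on A le x y \<in> A" "meet_on A le x z \<in> A" using meet_eq xyz by blast+
    show "?L = ?R"
    proof (rule inj)
      show "?L \<in> A" using meet_eq[OF xyz(1) j1] by blast
      show "?R \<in> A" using join_eq[OF m1] by blast
      show "\<forall>j\<in>J. f ?L j = f ?R j"
      proof
        fix j assume j: "j \<in> J"
        have "f ?L j = mn j (f x j) (mx j (f y j) (f z j))"
          using meet_eq[OF xyz(1) j1] join_eq[OF xyz(2,3)] j by simp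
        also have "\<dots> = mx j (mn j (f x j) (f y j)) (mn j (f x j) (f z j))"
          using chain_dist j fC xyz by blast
        also have "\<dots> = f ?R j"
          using join_eq[OF m1] meet_eq[OF xyz(1,2)] meet_eq[OF xyz(1,3)] j by simp
        finally show "f ?L j = f ?R j" .
      qed
    qed
  qed
qed


fun firstin :: "nat list \<Rightarrow> nat set \<Rightarrow> nat" where
  "firstin [] H = Min H"
| "firstin (x # xs) H = (if x \<in> H then x else firstin xs H)"

definition Ol :: "nat set set \<Rightarrow> nat list \<Rightarrow> nat set \<Rightarrow> nat" where
  "Ol I xs H = (if H \<in> I then firstin xs H else undefined)"

lemma firstin_in: "finite H \<Longrightarrow> H \<noteq> {} \<Longrightarrow> firstin xs H \<in> H"
  by (induction xs) auto

lemma Min_iv [simp]: "(s::nat) \<le> t \<Longrightarrow> Min {s..t} = s"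
  by (simp add: Min_eq_iff)

lemma firstin_iv [simp]: "s \<le> t \<Longrightarrow> firstin [] {s..t} = s"
  by (simp add: Min_eq_iff)

lemma firstin_cross:
  assumes "finite H" "H \<noteq> {}" "finite K" "K \<noteq> {}"
    "firstin xs H \<in> K" "firstin xs K \<in> H"
  shows "firstin xs H = firstin xs K"
  using assms
proof (induction xs)
  case Nil
  have "Min H \<in> K" "Min K \<in> H" using Nil.prems(5,6) by simp_all
  hence "Min K \<le> Min H" "Min H \<le> Min K" using Nil.prems(1,3) Min_le by blast+
  thus ?case by simp
next
  case (Cons x xs)
  then show ?case by (auto split: if_splits)
qed

lemma Ol_orientation:
  assumes ih: "interval_hypergraph n I"
  shows "orientation I (Ol I xs)"
  unfolding orientation_def Ol_def
proof (intro conjI allI ballI impI)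
  fix H assume "H \<in> I"
  then obtain a b where "a \<le> b" "H = {a..b}" using ih_interval[OF ih] by metis
  hence "finite H" "H \<noteq> {}" by auto
  thus "(if H \<in> I then firstin xs H else undefined) \<in> H" using \<open>H \<in> I\<close> firstin_in by simp
next
  fix H assume "H \<notin> I" thus "(if H \<in> I then firstin xs H else undefined) = undefined" by simp
qed

lemma Ol_acyclic:
  assumes ih: "interval_hypergraph n I"
  shows "acyclic_orientation I (Ol I xs)"
  unfolding acyclic_iff_no_twocyc[OF ih Ol_orientation[OF ih]]
proof (intro ballI notI)
  fix H K assume HK: "H \<in> I" "K \<in> I" "twocyc (Ol I xs) H K"
  obtain a b where "a \<le> b" "H = {a..b}" using ih_interval[OF ih HK(1)] by metis
  hence H: "finite H" "H \<noteq> {}" by auto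
  obtain a b where "a \<le> b" "K = {a..b}" using ih_interval[OF ih HK(2)] by metis
  hence K: "finite K" "K \<noteq> {}" by auto
  have "firstin xs H = firstin xs K"
    using firstin_cross[OF H K] HK unfolding twocyc_def Ol_def by auto
  thus False using HK unfolding twocyc_def Ol_def by auto
qed

lemma Ol_carrier: "interval_hypergraph n I \<Longrightarrow> Ol I xs \<in> P_carrier I"
  using Ol_acyclic unfolding P_carrier_def by blast

lemma flipI:
  assumes ih: "interval_hypergraph n I" and ne: "O1 \<noteq> O2" and ij: "1 \<le> i" "i < j" "j \<le> n"
    and c: "\<And>s t. 1 \<le> s \<Longrightarrow> s \<le> t \<Longrightarrow> t \<le> n \<Longrightarrow> {s..t} \<in> I \<Longrightarrow>
         (O1 {s..t} \<noteq> O2 {s..t} \<longrightarrow> O1 {s..t} = i \<and> O2 {s..t} = j) \<and>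
         (s \<le> i \<and> j \<le> t \<longrightarrow> (O1 {s..t} = i \<longleftrightarrow> O2 {s..t} = j))"
  shows "increasing_flip n I O1 O2"
proof -
  have "\<forall>H\<in>I. (O1 H \<noteq> O2 H \<longrightarrow> O1 H = i \<and> O2 H = j) \<and> ({i, j} \<subseteq> H \<longrightarrow> (O1 H = i) = (O2 H = j))"
  proof
    fix H assume H: "H \<in> I"
    then obtain s t where st: "1 \<le> s" "s \<le> t" "t \<le> n" "H = {s..t}" using ih_interval[OF ih] by metis
    show "(O1 H \<noteq> O2 H \<longrightarrow> O1 H = i \<and> O2 H = j) \<and> ({i, j} \<subseteq> H \<longrightarrow> (O1 H = i) = (O2 H = j))"
      using c[OF st(1-3)] H st(4) by auto
  qed
  thus ?thesis using ne ij unfolding increasing_flip_def by blast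
qed

lemma Ol_flip:
  assumes ih: "interval_hypergraph n I" and "Ol I xs \<noteq> Ol I ys" "1 \<le> i" "i < j" "j \<le> n"
    and "\<And>s t. 1 \<le> s \<Longrightarrow> s \<le> t \<Longrightarrow> t \<le> n \<Longrightarrow> {s..t} \<in> I \<Longrightarrow>
         (firstin xs {s..t} \<noteq> firstin ys {s..t} \<longrightarrow> firstin xs {s..t} = i \<and> firstin ys {s..t} = j) \<and>
         (s \<le> i \<and> j \<le> t \<longrightarrow> (firstin xs {s..t} = i \<longleftrightarrow> firstin ys {s..t} = j))"
  shows "P_le n I (Ol I xs) (Ol I ys)"
proof (rule flip_step[OF Ol_acyclic[OF ih] Ol_acyclic[OF ih]])
  show "increasing_flip n I (Ol I xs) (Ol I ys)"
    by (rule flipI[OF ih assms(2-5)]) (use assms(6) in \<open>auto simp: Ol_def\<close>)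
qed

lemma Ol_step:
  assumes ih: "interval_hypergraph n I" and "1 \<le> i" "i < j" "j \<le> n"
    and "\<And>s t. 1 \<le> s \<Longrightarrow> s \<le> t \<Longrightarrow> t \<le> n \<Longrightarrow> {s..t} \<in> I \<Longrightarrow>
         (firstin xs {s..t} \<noteq> firstin ys {s..t} \<longrightarrow> firstin xs {s..t} = i \<and> firstin ys {s..t} = j) \<and>
         (s \<le> i \<and> j \<le> t \<longrightarrow> (firstin xs {s..t} = i \<longleftrightarrow> firstin ys {s..t} = j))"
  shows "P_le n I (Ol I xs) (Ol I ys)"
proof (cases "Ol I xs = Ol I ys")
  case True
  then show ?thesis using P_le_refl[OF Ol_acyclic[OF ih]] by metis
next
  case False
  then show ?thesis using Ol_flip[OF ih False assms(2-5)] by blast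
qed

lemma Ol_eq:
  assumes "\<And>s t. 1 \<le> s \<Longrightarrow> s \<le> t \<Longrightarrow> t \<le> n \<Longrightarrow> {s..t} \<in> I \<Longrightarrow> firstin xs {s..t} = firstin ys {s..t}"
    and ih: "interval_hypergraph n I"
  shows "Ol I xs = Ol I ys"
proof
  fix H show "Ol I xs H = Ol I ys H"
  proof (cases "H \<in> I")
    case True
    then obtain s t where st: "1 \<le> s" "s \<le> t" "t \<le> n" "H = {s..t}" using ih_interval[OF ih] by metis
    then show ?thesis using assms(1)[OF st(1-3)] True unfolding Ol_def by auto
  qed (simp add: Ol_def)
qed

lemma Ol_val: "H \<in> I \<Longrightarrow> Ol I xs H = firstin xs H"
  unfolding Ol_def by simp


lemma join_on_eq:
  assumes "partial_order_on' A le" "is_lub A le x y s"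
  shows "join_on A le x y = s"
proof -
  have "\<And>t. is_lub A le x y t \<Longrightarrow> t = s"
  proof -
    fix t assume t: "is_lub A le x y t"
    have "t \<in> A" "s \<in> A" "le t s" "le s t" using t assms(2) unfolding is_lub_def by auto
    thus "t = s" using assms(1) unfolding partial_order_on'_def by blast
  qed
  thus ?thesis unfolding join_on_def using assms(2) by (rule the_equality[rotated])
qed

lemma meet_on_eq:
  assumes "partial_order_on' A le" "is_glb A le x y s"
  shows "meet_on A le x y = s"
proof -
  have "\<And>t. is_glb A le x y t \<Longrightarrow> t = s"
  proof -
    fix t assume t: "is_glb A le x y t"
    have "t \<in> A" "s \<in> A" "le t s" "le s t" using t assms(2) unfolding is_glb_def by auto
    thus "t = s" using assms(1) unfolding partial_order_on'_def by blast
  qed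
  thus ?thesis unfolding meet_on_def using assms(2) by (rule the_equality[rotated])
qed

lemma N5_contra:
  assumes dl: "distributive_lattice_on A le"
    and el: "z \<in> A" "a \<in> A" "b \<in> A" "c \<in> A" "t \<in> A"
    and rel: "le z a" "le a b" "le b t" "le z c" "le c t"
    and ne: "a \<noteq> b"
    and jf: "\<forall>j\<in>A. le a j \<longrightarrow> le c j \<longrightarrow> le j t \<longrightarrow> j = t"
    and mf: "\<forall>m\<in>A. le m b \<longrightarrow> le m c \<longrightarrow> le z m \<longrightarrow> m = z"
  shows False
proof -
  have lat: "lattice_on A le" using dl unfolding distributive_lattice_on_def by blast
  have po: "partial_order_on' A le" using lat unfolding lattice_on_def by blast
  have refl: "\<And>x. x \<in> A \<Longrightarrow> le x x" using po unfolding partial_order_on'_def by blast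
  have tr: "\<And>x y w. x \<in> A \<Longrightarrow> y \<in> A \<Longrightarrow> w \<in> A \<Longrightarrow> le x y \<Longrightarrow> le y w \<Longrightarrow> le x w"
    using po unfolding partial_order_on'_def by blast
  obtain s where s: "is_lub A le a c s" using lat el unfolding lattice_on_def by blast
  have "s \<in> A" "le a s" "le c s" using s unfolding is_lub_def by auto
  moreover have "le a t" using tr el rel by blast
  hence "le s t" using s el rel unfolding is_lub_def by blast
  ultimately have "s = t" using jf by blast
  hence J1: "join_on A le a c = t" using join_on_eq[OF po s] by simp
  have "is_glb A le b t b" unfolding is_glb_def using el refl rel by blast
  hence M1: "meet_on A le b t = b" using meet_on_eq[OF po] by blast
  have "is_glb A le b a a" unfolding is_glb_def using el refl rel by blast
  hence M2: "meet_on A le b a = a" using meet_on_eq[OF po] by blast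
  obtain m where m: "is_glb A le b c m" using lat el unfolding lattice_on_def by blast
  have "m \<in> A" "le m b" "le m c" using m unfolding is_glb_def by auto
  moreover have "le z b" using tr el rel by blast
  hence "le z m" using m el rel unfolding is_glb_def by blast
  ultimately have "m = z" using mf by blast
  hence M3: "meet_on A le b c = z" using meet_on_eq[OF po m] by simp
  have "is_lub A le a z a" unfolding is_lub_def using el refl rel by blast
  hence J2: "join_on A le a z = a" using join_on_eq[OF po] by blast
  have "meet_on A le b (join_on A le a c) = join_on A le (meet_on A le b a) (meet_on A le b c)"
    using dl el unfolding distributive_lattice_on_def by blast
  hence "b = a" using J1 M1 M2 M3 J2 by simp
  thus False using ne by simp
qed

lemma obsB_not_dist:
  assumes ih: "interval_hypergraph n I"
    and X: "{p..b0} \<in> I" and Y: "{q..r} \<in> I" and Z: "Z \<in> I"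
    and ord: "p < q" "q \<le> b0" "b0 < r" and sub: "{p..r} \<subseteq> Z"
  shows "\<not> distributive_lattice_on (P_carrier I) (P_le n I)"
proof
  assume dl: "distributive_lattice_on (P_carrier I) (P_le n I)"
  obtain z1 z2 where Zs: "1 \<le> z1" "z1 \<le> z2" "z2 \<le> n" "Z = {z1..z2}" using ih_interval[OF ih Z] by metis
  have zp: "z1 \<le> p" and zr: "r \<le> z2" using sub Zs ord by auto
  have p1: "1 \<le> p" and rn: "r \<le> n" using zp Zs zr by auto
  let ?L0 = "[p,q,r]" let ?La = "[p,r,q]" let ?Lb = "[r,p,q]" let ?Lc = "[q,p,r]" let ?L1 = "[r,q,p]"
  have vY: "firstin ?L0 {q..r} = q" "firstin ?La {q..r} = r" "firstin ?Lc {q..r} = q" "firstin ?L1 {q..r} = r"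
    using ord by auto
  have vX: "firstin ?L0 {p..b0} = p" "firstin ?Lb {p..b0} = p" "firstin ?L1 {p..b0} = q"
    "firstin ?Lc {p..b0} = q" using ord by auto
  have vZ: "firstin ?La Z = p" "firstin ?Lb Z = r" using ord Zs zp zr by auto
  have neq: "\<And>xs ys H. H \<in> I \<Longrightarrow> firstin xs H \<noteq> firstin ys H \<Longrightarrow> Ol I xs \<noteq> Ol I ys"
    by (metis Ol_val)
  have f1: "P_le n I (Ol I ?L0) (Ol I ?La)"
    by (rule Ol_flip[where i=q and j=r, OF ih neq[OF Y]]) (use ord vY p1 rn in auto)
  have f2: "P_le n I (Ol I ?La) (Ol I ?Lb)"
    by (rule Ol_flip[where i=p and j=r, OF ih neq[OF Z]]) (use ord vZ p1 rn in auto)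
  have f3: "P_le n I (Ol I ?Lb) (Ol I ?L1)"
    by (rule Ol_flip[where i=p and j=q, OF ih neq[OF X]]) (use ord vX p1 rn in auto)
  have f4: "P_le n I (Ol I ?L0) (Ol I ?Lc)"
    by (rule Ol_flip[where i=p and j=q, OF ih neq[OF X]]) (use ord vX p1 rn in auto)
  have f5: "P_le n I (Ol I ?Lc) (Ol I ?L1)"
    by (rule Ol_flip[where i=q and j=r, OF ih neq[OF Y]]) (use ord vY p1 rn in auto)
  have car: "\<And>xs. Ol I xs \<in> P_carrier I" using Ol_carrier[OF ih] .
  have twoc: "\<And>Q H K. P_le n I Q Q \<Longrightarrow> H \<in> I \<Longrightarrow> K \<in> I \<Longrightarrow> twocyc Q H K \<Longrightarrow> False"
  proof -
    fix Q H K assume "P_le n I Q Q" "H \<in> I" "K \<in> I" "twocyc Q H K"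
    hence "acyclic_orientation I Q" "H \<in> I" "K \<in> I" "twocyc Q H K" using P_le_pw by auto
    thus False using acyclic_iff_no_twocyc[OF ih] unfolding acyclic_orientation_def by blast
  qed
  note t1 = N5_contra[OF dl]
  note t2 = N5_contra[OF dl car[of "?L0"] car[of "?La"] car[of "?Lb"] car[of "?Lc"] car[of "?L1"]]
  note t3 = t2[OF f1]
  note t4 = t3[OF f2]
  note t5 = t4[OF f3]
  note t6 = t5[OF f4]
  note t7 = t6[OF f5]
  show False
  proof (rule t7)
    have pr: "p \<noteq> r" using ord by simp
    show "Ol I ?La \<noteq> Ol I ?Lb" by (rule neq[OF Z]) (subst vZ(1), subst vZ(2), rule pr)
    show "\<forall>j\<in>P_carrier I. P_le n I (Ol I ?La) j \<longrightarrow> P_le n I (Ol I ?Lc) j \<longrightarrow> P_le n I j (Ol I ?L1) \<longrightarrow> j = Ol I ?L1"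
    proof (intro ballI impI)
      fix j assume j: "j \<in> P_carrier I" "P_le n I (Ol I ?La) j" "P_le n I (Ol I ?Lc) j" "P_le n I j (Ol I ?L1)"
      have ac: "acyclic_orientation I j" using j P_le_pw by blast
      have jr: "P_le n I j j" using P_le_refl[OF ac] .
      have b1: "\<forall>H\<in>I. firstin ?La H \<le> j H" using P_le_pw(3)[OF j(2)] Ol_val by metis
      have b2: "\<forall>H\<in>I. firstin ?Lc H \<le> j H" using P_le_pw(3)[OF j(3)] Ol_val by metis
      have b3: "\<forall>H\<in>I. j H \<le> firstin ?L1 H" using P_le_pw(3)[OF j(4)] Ol_val by metis
      have jin: "\<forall>H\<in>I. j H \<in> H" using ac unfolding acyclic_orientation_def orientation_def by blast
      have jY: "j {q..r} = r" using b1 b3 Y vY by (metis antisym)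
      show "j = Ol I ?L1"
      proof (rule orientation_eqI)
        show "orientation I j" using ac unfolding acyclic_orientation_def by blast
        show "orientation I (Ol I ?L1)" using Ol_orientation[OF ih] .
        show "\<forall>H\<in>I. j H = Ol I ?L1 H"
        proof
          fix H assume H: "H \<in> I"
          then obtain s t where st: "1 \<le> s" "s \<le> t" "t \<le> n" "H = {s..t}" using ih_interval[OF ih] by metis
          have B1: "firstin ?La {s..t} \<le> j {s..t}" using b1 H st by auto
          have B2: "firstin ?Lc {s..t} \<le> j {s..t}" using b2 H st by auto
          have B3: "j {s..t} \<le> firstin ?L1 {s..t}" using b3 H st by auto
          show "j H = Ol I ?L1 H"
          proof (cases "s \<le> p \<and> r \<le> t")
            case True
            have "j {s..t} = r"
            proof (rule ccontr)
              assume "j {s..t} \<noteq> r"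
              hence "twocyc j {s..t} {q..r}" unfolding twocyc_def using jY True B2 B3 ord by auto
              thus False using twoc[OF jr _ Y] H st by blast
            qed
            thus ?thesis using Ol_val[OF H] st True ord by auto
          next
            case False
            thus ?thesis using Ol_val[OF H] st B1 B2 B3 ord by (auto split: if_splits)
          qed
        qed
      qed
    qed
    show "\<forall>m\<in>P_carrier I. P_le n I m (Ol I ?Lb) \<longrightarrow> P_le n I m (Ol I ?Lc) \<longrightarrow> P_le n I (Ol I ?L0) m \<longrightarrow> m = Ol I ?L0"
    proof (intro ballI impI)
      fix j assume j: "j \<in> P_carrier I" "P_le n I j (Ol I ?Lb)" "P_le n I j (Ol I ?Lc)" "P_le n I (Ol I ?L0) j"
      have ac: "acyclic_orientation I j" using j P_le_pw by blast
      have jr: "P_le n I j j" using P_le_refl[OF ac] .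
      have b1: "\<forall>H\<in>I. j H \<le> firstin ?Lb H" using P_le_pw(3)[OF j(2)] Ol_val by metis
      have b2: "\<forall>H\<in>I. j H \<le> firstin ?Lc H" using P_le_pw(3)[OF j(3)] Ol_val by metis
      have b3: "\<forall>H\<in>I. firstin ?L0 H \<le> j H" using P_le_pw(3)[OF j(4)] Ol_val by metis
      have jX: "j {p..b0} = p" using b1 b3 X vX by (metis antisym)
      show "j = Ol I ?L0"
      proof (rule orientation_eqI)
        show "orientation I j" using ac unfolding acyclic_orientation_def by blast
        show "orientation I (Ol I ?L0)" using Ol_orientation[OF ih] .
        show "\<forall>H\<in>I. j H = Ol I ?L0 H"
        proof
          fix H assume H: "H \<in> I"
          then obtain s t where st: "1 \<le> s" "s \<le> t" "t \<le> n" "H = {s..t}" using ih_interval[OF ih] by metis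
          have B1: "j {s..t} \<le> firstin ?Lb {s..t}" using b1 H st by auto
          have B2: "j {s..t} \<le> firstin ?Lc {s..t}" using b2 H st by auto
          have B3: "firstin ?L0 {s..t} \<le> j {s..t}" using b3 H st by auto
          show "j H = Ol I ?L0 H"
          proof (cases "s \<le> p \<and> r \<le> t")
            case True
            have "j {s..t} = p"
            proof (rule ccontr)
              assume "j {s..t} \<noteq> p"
              hence "twocyc j {p..b0} {s..t}" unfolding twocyc_def using jX True B2 B3 ord by auto
              thus False using twoc[OF jr X] H st by blast
            qed
            thus ?thesis using Ol_val[OF H] st True ord by auto
          next
            case False
            thus ?thesis using Ol_val[OF H] st B1 B2 B3 ord by (auto split: if_splits)
          qed
        qed
      qed
    qed
  qed
qed


lemma obsA_min_not_dist:
  assumes ih: "interval_hypergraph n I"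
    and X: "{a..b} \<in> I" and Y: "{c..d} \<in> I"
    and ord: "a < c" "c < b" "b < d"
    and noCB: "\<And>s t. {s..t} \<in> I \<Longrightarrow> a < s \<Longrightarrow> s \<le> c \<Longrightarrow> b \<le> t \<Longrightarrow> t < d \<Longrightarrow> False"
  shows "\<not> lattice_on (P_carrier I) (P_le n I)"
proof
  assume lat: "lattice_on (P_carrier I) (P_le n I)"
  obtain a1 b1 where "1 \<le> a1" "a1 \<le> b1" "b1 \<le> n" "{a..b} = {a1..b1}" using ih_interval[OF ih X] by metis
  hence a1: "1 \<le> a" using ord by (metis atLeastAtMost_iff atLeastatMost_empty_iff2 atLeastatMost_subset_iff order.trans order_less_imp_le subset_refl)
  obtain c1 d1 where "1 \<le> c1" "c1 \<le> d1" "d1 \<le> n" "{c..d} = {c1..d1}" using ih_interval[OF ih Y] by metis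
  hence dn: "d \<le> n" using ord by (metis atLeastAtMost_iff atLeastatMost_empty_iff2 atLeastatMost_subset_iff order.trans order_less_imp_le subset_refl)
  let ?x = "[c,a,b,d]" let ?y = "[a,b,c,d]" let ?u1 = "[d,c,a,b]" let ?u2 = "[b,c,a,d]"
  let ?m1 = "[c,a,d,b]" let ?v = "[b,a,c,d]" let ?w1 = "[a,d,b,c]" let ?w2 = "[d,a,b,c]"
  have neq: "\<And>xs ys H. H \<in> I \<Longrightarrow> firstin xs H \<noteq> firstin ys H \<Longrightarrow> Ol I xs \<noteq> Ol I ys"
    by (metis Ol_val)
  have Yd: "{d..d} \<in> I" "{b..b} \<in> I" "{c..c} \<in> I" using ih ord a1 dn unfolding interval_hypergraph_def by auto
  have xm1: "P_le n I (Ol I ?x) (Ol I ?m1)"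
    by (rule Ol_step[where i=b and j=d, OF ih]) (use ord a1 dn in auto)
  have m1u1: "P_le n I (Ol I ?m1) (Ol I ?u1)"
    by (rule Ol_step[where i=c and j=d, OF ih]) (use ord a1 dn in auto)
  have xu2: "P_le n I (Ol I ?x) (Ol I ?u2)"
    by (rule Ol_step[where i=c and j=b, OF ih]) (use ord a1 dn in auto)
  have yv: "P_le n I (Ol I ?y) (Ol I ?v)"
    by (rule Ol_step[where i=a and j=b, OF ih]) (use ord a1 dn in auto)
  have vu2: "P_le n I (Ol I ?v) (Ol I ?u2)"
    by (rule Ol_step[where i=a and j=c, OF ih]) (use ord a1 dn in auto)
  have yw1: "P_le n I (Ol I ?y) (Ol I ?w1)"
    by (rule Ol_step[where i=b and j=d, OF ih]) (use ord a1 dn in auto)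
  have w1w2: "P_le n I (Ol I ?w1) (Ol I ?w2)"
    by (rule Ol_step[where i=a and j=d, OF ih]) (use ord a1 dn in auto)
  have w2u1: "P_le n I (Ol I ?w2) (Ol I ?u1)"
    by (rule Ol_step[where i=a and j=c, OF ih]) (use ord a1 dn in \<open>auto dest: noCB simp: not_le\<close>)
  have xu1: "P_le n I (Ol I ?x) (Ol I ?u1)" using P_le_trans[OF xm1 m1u1] .
  have yu1: "P_le n I (Ol I ?y) (Ol I ?u1)" using P_le_trans[OF P_le_trans[OF yw1 w1w2] w2u1] .
  have yu2: "P_le n I (Ol I ?y) (Ol I ?u2)" using P_le_trans[OF yv vu2] .
  obtain sp where sp: "is_lub (P_carrier I) (P_le n I) (Ol I ?x) (Ol I ?y) sp"
    using lat Ol_carrier[OF ih] unfolding lattice_on_def by blast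
  have s1: "P_le n I (Ol I ?x) sp" "P_le n I (Ol I ?y) sp" using sp unfolding is_lub_def by auto
  have s2: "P_le n I sp (Ol I ?u1)" "P_le n I sp (Ol I ?u2)"
    using sp xu1 yu1 xu2 yu2 Ol_carrier[OF ih] unfolding is_lub_def by blast+
  have ac: "acyclic_orientation I sp" using P_le_pw(2)[OF s1(1)] .
  have sX: "sp {a..b} = c"
  proof -
    have "firstin ?x {a..b} \<le> sp {a..b}" using P_le_pw(3)[OF s1(1)] X Ol_val[OF X] by metis
    moreover have "sp {a..b} \<le> firstin ?u1 {a..b}" using P_le_pw(3)[OF s2(1)] X Ol_val[OF X] by metis
    ultimately show ?thesis using ord by auto
  qed
  have sY: "sp {c..d} = b"
  proof -
    have "firstin ?y {c..d} \<le> sp {c..d}" using P_le_pw(3)[OF s1(2)] Y Ol_val[OF Y] by metis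
    moreover have "sp {c..d} \<le> firstin ?u2 {c..d}" using P_le_pw(3)[OF s2(2)] Y Ol_val[OF Y] by metis
    ultimately show ?thesis using ord by auto
  qed
  have "twocyc sp {a..b} {c..d}" unfolding twocyc_def using sX sY ord by auto
  thus False using ac X Y acyclic_iff_no_twocyc[OF ih] unfolding acyclic_orientation_def by blast
qed

lemma obsA_not_lattice:
  assumes ih: "interval_hypergraph n I"
    and X: "{a..b} \<in> I" and Y: "{c..d} \<in> I"
    and ord: "a < c" "c < b" "b < d" and nI: "{c..b} \<notin> I"
  shows "\<not> lattice_on (P_carrier I) (P_le n I)"
proof -
  define P where "P = (\<lambda>(a::nat,b::nat,c::nat,d::nat). {a..b} \<in> I \<and> {c..d} \<in> I \<and> a < c \<and> c < b \<and> b < d \<and> {c..b} \<notin> I)"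
  have "P (a,b,c,d)" unfolding P_def using X Y ord nI by simp
  then obtain q where q: "P q" and qmin: "\<forall>y. P y \<longrightarrow> (\<lambda>(a::nat,b::nat,c::nat,d::nat). d - a) q \<le> (\<lambda>(a,b,c,d). d - a) y"
    using ex_has_least_nat[of P "(a,b,c,d)" "\<lambda>(a,b,c,d). d - a"] by blast
  obtain a' b' c' d' where qq: "q = (a',b',c',d')" by (metis prod_cases4)
  have q': "{a'..b'} \<in> I" "{c'..d'} \<in> I" "a' < c'" "c' < b'" "b' < d'" "{c'..b'} \<notin> I"
    using q qq unfolding P_def by auto
  have mn: "\<And>a b c d. P (a,b,c,d) \<Longrightarrow> d' - a' \<le> d - a" using qmin qq by fastforce
  show ?thesis
  proof (rule obsA_min_not_dist[OF ih q'(1,2,3,4,5)])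
    fix s t assume H: "{s..t} \<in> I" "a' < s" "s \<le> c'" "b' \<le> t" "t < d'"
    show False
    proof (cases "s = c'")
      case True
      show False
      proof (cases "t = b'")
        case True thus False using H \<open>s = c'\<close> q' by simp
      next
        case False
        hence "P (a',b',c',t)" unfolding P_def using q' H True by auto
        thus False using mn[of a' b' c' t] H q' by simp
      qed
    next
      case False
      hence sc: "s < c'" using H by simp
      have Psb: "{s..b'} \<in> I \<Longrightarrow> False"
      proof -
        assume "{s..b'} \<in> I"
        hence "P (s,b',c',d')" unfolding P_def using q' sc by auto
        thus False using mn[of s b' c' d'] H q' by simp
      qed
      show False
      proof (cases "t = b'")
        case True thus False using Psb H by simp
      next
        case False
        hence "P (a',b',s,t) \<or> {s..b'} \<in> I" unfolding P_def using q' H sc by auto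
        thus False using Psb mn[of a' b' s t] H q' by auto
      qed
    qed
  qed
qed


lemma acyc_cons:
  assumes ih: "interval_hypergraph n I" and ac: "acyclic_orientation I Or"
    and HK: "H \<in> I" "K \<in> I" "K \<subseteq> H" "Or H \<in> K"
  shows "Or H = Or K"
proof (rule ccontr)
  assume ne: "Or H \<noteq> Or K"
  have "Or K \<in> K" using ac HK unfolding acyclic_orientation_def orientation_def by blast
  hence "twocyc Or H K" unfolding twocyc_def using ne HK by auto
  thus False using ac HK acyclic_iff_no_twocyc[OF ih] unfolding acyclic_orientation_def by blast
qed

lemma ih_finite: "interval_hypergraph n I \<Longrightarrow> finite I"
proof -
  assume ih: "interval_hypergraph n I"
  have "I \<subseteq> Pow {1..n}" using ih unfolding interval_hypergraph_def by fastforce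
  thus "finite I" using finite_subset by (metis finite_Pow_iff finite_atLeastAtMost)
qed

lemma ih_sing: "interval_hypergraph n I \<Longrightarrow> H \<in> I \<Longrightarrow> v \<in> H \<Longrightarrow> {v} \<in> I"
  unfolding interval_hypergraph_def by fastforce

locale nice =
  fixes n :: nat and I :: "nat set set"
  assumes ih: "interval_hypergraph n I"
    and nA: "\<And>a b c d. {a..b} \<in> I \<Longrightarrow> {c..d} \<in> I \<Longrightarrow> a < c \<Longrightarrow> c < b \<Longrightarrow> b < d \<Longrightarrow> {c..b} \<in> I"
    and nB: "\<And>a b c d Z. {a..b} \<in> I \<Longrightarrow> {c..d} \<in> I \<Longrightarrow> Z \<in> I \<Longrightarrow> a < c \<Longrightarrow> c \<le> b \<Longrightarrow> b < d \<Longrightarrow> {a..d} \<subseteq> Z \<Longrightarrow> False"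
begin

lemma iv: assumes "H \<in> I" obtains s t where "1 \<le> s" "s \<le> t" "t \<le> n" "H = {s..t}"
  using ih_interval[OF ih assms] by metis

lemma finI: "finite I" using ih_finite[OF ih] .

lemma finH: "H \<in> I \<Longrightarrow> finite H" by (metis iv finite_atLeastAtMost)
lemma neH: "H \<in> I \<Longrightarrow> H \<noteq> {}" by (metis iv atLeastatMost_empty_iff)

lemma nest:
  assumes H: "H \<in> I" and K: "K \<in> I" and Z: "Z \<in> I" and sub: "H \<subseteq> Z" "K \<subseteq> Z" and int: "H \<inter> K \<noteq> {}"
  shows "H \<subseteq> K \<or> K \<subseteq> H"
proof (rule ccontr)
  assume nn: "\<not> (H \<subseteq> K \<or> K \<subseteq> H)"
  obtain s1 t1 where h: "s1 \<le> t1" "H = {s1..t1}" using iv[OF H] by metis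
  obtain s2 t2 where k: "s2 \<le> t2" "K = {s2..t2}" using iv[OF K] by metis
  have 1: "\<not> (s2 \<le> s1 \<and> t1 \<le> t2)" using nn h k by auto
  have 2: "\<not> (s1 \<le> s2 \<and> t2 \<le> t1)" using nn h k by auto
  obtain x where "x \<in> H \<inter> K" using int by blast
  hence x: "s1 \<le> x" "x \<le> t1" "s2 \<le> x" "x \<le> t2" using h k by auto
  have c: "(s1 < s2 \<and> s2 \<le> t1 \<and> t1 < t2) \<or> (s2 < s1 \<and> s1 \<le> t2 \<and> t2 < t1)"
    using 1 2 x by auto
  thus False
  proof
    assume a: "s1 < s2 \<and> s2 \<le> t1 \<and> t1 < t2"
    have "{s1..t2} \<subseteq> Z"
    proof
      fix x assume "x \<in> {s1..t2}"
      hence "x \<in> H \<or> x \<in> K" using h k a by auto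
      thus "x \<in> Z" using sub by auto
    qed
    with a show False using nB[of s1 t1 s2 t2 Z] H K Z h k by auto
  next
    assume a: "s2 < s1 \<and> s1 \<le> t2 \<and> t2 < t1"
    have "{s2..t1} \<subseteq> Z"
    proof
      fix x assume "x \<in> {s2..t1}"
      hence "x \<in> H \<or> x \<in> K" using h k a by auto
      thus "x \<in> Z" using sub by auto
    qed
    with a show False using nB[of s2 t2 s1 t1 Z] H K Z h k by auto
  qed
qed

lemma cross:
  assumes H: "H \<in> I" and K: "K \<in> I" and nn: "\<not> H \<subseteq> K" "\<not> K \<subseteq> H"
    and uv: "u \<in> H \<inter> K" "v \<in> H \<inter> K" "u \<noteq> v"
  shows "H \<inter> K \<in> I"
proof -
  obtain s1 t1 where h: "s1 \<le> t1" "H = {s1..t1}" using iv[OF H] by metis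
  obtain s2 t2 where k: "s2 \<le> t2" "K = {s2..t2}" using iv[OF K] by metis
  have 1: "\<not> (s2 \<le> s1 \<and> t1 \<le> t2)" using nn h k by auto
  have 2: "\<not> (s1 \<le> s2 \<and> t2 \<le> t1)" using nn h k by auto
  have x: "s1 \<le> u" "u \<le> t1" "s2 \<le> u" "u \<le> t2" "s1 \<le> v" "v \<le> t1" "s2 \<le> v" "v \<le> t2"
    using uv h k by auto
  have c: "(s1 < s2 \<and> s2 < t1 \<and> t1 < t2) \<or> (s2 < s1 \<and> s1 < t2 \<and> t2 < t1)"
    using 1 2 x uv(3) by auto
  thus ?thesis
  proof
    assume a: "s1 < s2 \<and> s2 < t1 \<and> t1 < t2"
    hence "H \<inter> K = {s2..t1}" using h k by auto
    thus ?thesis using nA[of s1 t1 s2 t2] H K h k a by auto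
  next
    assume a: "s2 < s1 \<and> s1 < t2 \<and> t2 < t1"
    hence "H \<inter> K = {s1..t2}" using h k by auto
    thus ?thesis using nA[of s2 t2 s1 t1] H K h k a by auto
  qed
qed

lemma nice_acyclic:
  assumes ori: "orientation I Or"
    and cons: "\<And>H K. H \<in> I \<Longrightarrow> K \<in> I \<Longrightarrow> K \<subseteq> H \<Longrightarrow> Or H \<in> K \<Longrightarrow> Or H = Or K"
  shows "acyclic_orientation I Or"
  unfolding acyclic_iff_no_twocyc[OF ih ori]
proof (intro ballI notI)
  fix H K assume HK: "H \<in> I" "K \<in> I" "twocyc Or H K"
  have in1: "Or K \<in> H" "Or K \<noteq> Or H" "Or H \<in> K" using HK unfolding twocyc_def by auto
  have OH: "Or H \<in> H" and OK: "Or K \<in> K" using ori HK unfolding orientation_def by auto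
  show False
  proof (cases "K \<subseteq> H")
    case True thus False using cons[OF HK(1,2) True in1(3)] in1 by simp
  next
    case F1: False
    show False
    proof (cases "H \<subseteq> K")
      case True thus False using cons[OF HK(2,1) True in1(1)] in1 by simp
    next
      case False
      have W: "H \<inter> K \<in> I" using cross[OF HK(1,2) False F1, of "Or H" "Or K"] in1 OH OK by auto
      have "Or H = Or (H \<inter> K)" using cons[OF HK(1) W _] in1 OH by auto
      moreover have "Or K = Or (H \<inter> K)" using cons[OF HK(2) W _] in1 OK by auto
      ultimately show False using in1 by simp
    qed
  qed
qed

definition blk :: "nat set \<Rightarrow> nat \<Rightarrow> nat set" where
  "blk H v = {v} \<union> \<Union>{K \<in> I. K \<subset> H \<and> v \<in> K}"

definition rep :: "nat set \<Rightarrow> nat \<Rightarrow> nat" where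
  "rep H v = Min (blk H v)"

lemma blk_props:
  assumes H: "H \<in> I" and v: "v \<in> H"
  shows "blk H v \<in> I" "v \<in> blk H v" "blk H v \<subseteq> H"
    "\<And>K. K \<in> I \<Longrightarrow> K \<subset> H \<Longrightarrow> v \<in> K \<Longrightarrow> K \<subseteq> blk H v"
    "blk H v = H \<Longrightarrow> H = {v}"
proof -
  define S where "S = {K \<in> I. K \<subset> H \<and> v \<in> K}"
  have vI: "{v} \<in> I" using ih_sing[OF ih H v] .
  have "\<exists>B. blk H v = B \<and> B \<in> I \<and> v \<in> B \<and> B \<subseteq> H \<and> (\<forall>K\<in>S. K \<subseteq> B) \<and> (B = H \<longrightarrow> H = {v})"
  proof (cases "S = {}")
    case True
    hence "H = {v}" using vI v unfolding S_def by blast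
    moreover have "blk H v = {v}" using True unfolding blk_def S_def by auto
    ultimately show ?thesis using vI True by auto
  next
    case False
    have finS: "finite S" using finI unfolding S_def by simp
    have f2: "finite (card ` S)" using finS by simp
    have ne2: "card ` S \<noteq> {}" using False by simp
    have "Max (card ` S) \<in> card ` S" using Max_in[OF f2 ne2] .
    then obtain K0 where K0a: "K0 \<in> S" "card K0 = Max (card ` S)" by force
    have "\<forall>K\<in>S. card K \<le> card K0"
    proof
      fix K assume "K \<in> S"
      hence "card K \<in> card ` S" by simp
      thus "card K \<le> card K0" using Max_ge[OF f2] K0a(2) by simp
    qed
    note K0 = K0a(1) this
    have K0I: "K0 \<in> I" "K0 \<subset> H" "v \<in> K0" using K0 unfolding S_def by auto
    have all: "\<forall>K\<in>S. K \<subseteq> K0"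
    proof
      fix K assume K: "K \<in> S"
      hence KI: "K \<in> I" "K \<subset> H" "v \<in> K" unfolding S_def by auto
      have "K \<subseteq> K0 \<or> K0 \<subseteq> K" using nest[OF KI(1) K0I(1) H] KI K0I by blast
      moreover have "K0 \<subset> K \<Longrightarrow> False"
      proof -
        assume "K0 \<subset> K"
        hence "card K0 < card K" using psubset_card_mono[OF finH[OF KI(1)]] by blast
        thus False using K0(2) K by force
      qed
      ultimately show "K \<subseteq> K0" by blast
    qed
    have U: "\<Union>S = K0" using all K0(1) by blast
    have "blk H v = K0" unfolding blk_def S_def[symmetric] U using K0I(3) by blast
    thus ?thesis using K0I all by blast
  qed
  then obtain B where B: "blk H v = B" "B \<in> I" "v \<in> B" "B \<subseteq> H" "\<forall>K\<in>S. K \<subseteq> B" "B = H \<longrightarrow> H = {v}" by blast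
  show "blk H v \<in> I" "v \<in> blk H v" "blk H v \<subseteq> H" "blk H v = H \<Longrightarrow> H = {v}" using B by auto
  show "\<And>K. K \<in> I \<Longrightarrow> K \<subset> H \<Longrightarrow> v \<in> K \<Longrightarrow> K \<subseteq> blk H v" using B unfolding S_def by auto
qed

lemma blk_same:
  assumes H: "H \<in> I" and v: "v \<in> H" and w: "w \<in> blk H v"
  shows "blk H w = blk H v"
proof (cases "blk H v = H")
  case True
  hence "H = {v}" using blk_props(5)[OF H v] by simp
  thus ?thesis using w True by auto
next
  case False
  have B: "blk H v \<in> I" "blk H v \<subset> H" using blk_props(1,3)[OF H v] False by auto
  have wH: "w \<in> H" using w blk_props(3)[OF H v] by auto
  have s1: "blk H v \<subseteq> blk H w" using blk_props(4)[OF H wH B(1) B(2) w] .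
  have "blk H w \<noteq> H"
  proof
    assume "blk H w = H"
    hence "H = {w}" using blk_props(5)[OF H wH] by simp
    thus False using B(2) w by auto
  qed
  hence B2: "blk H w \<in> I" "blk H w \<subset> H" using blk_props(1,3)[OF H wH] by auto
  have "v \<in> blk H w" using s1 blk_props(2)[OF H v] by auto
  hence "blk H w \<subseteq> blk H v" using blk_props(4)[OF H v B2(1) B2(2)] by simp
  thus ?thesis using s1 by simp
qed

lemma blk_fin: "H \<in> I \<Longrightarrow> v \<in> H \<Longrightarrow> finite (blk H v)"
  using blk_props(1) finH by blast

lemma rep_in: "H \<in> I \<Longrightarrow> v \<in> H \<Longrightarrow> rep H v \<in> blk H v"
  unfolding rep_def using blk_fin blk_props(2) by (metis Min_in empty_iff)

lemma rep_H: "H \<in> I \<Longrightarrow> v \<in> H \<Longrightarrow> rep H v \<in> H"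
  using rep_in blk_props(3) by blast

lemma rep_rep: "H \<in> I \<Longrightarrow> v \<in> H \<Longrightarrow> rep H (rep H v) = rep H v"
  unfolding rep_def using blk_same rep_in rep_def by metis

lemma rep_eq_blk:
  assumes "H \<in> I" "v \<in> H" "w \<in> H" "rep H v = rep H w"
  shows "blk H v = blk H w"
  using assms blk_same rep_in by metis

lemma rep_le:
  assumes H: "H \<in> I" and vw: "v \<in> H" "w \<in> H" "v \<le> w"
  shows "rep H v \<le> rep H w"
proof (cases "blk H v = blk H w")
  case True thus ?thesis unfolding rep_def by simp
next
  case False
  have disj: "blk H v \<inter> blk H w = {}"
  proof (rule ccontr)
    assume "blk H v \<inter> blk H w \<noteq> {}"
    then obtain x where x: "x \<in> blk H v" "x \<in> blk H w" by blast
    thus False using blk_same[OF H vw(1) x(1)] blk_same[OF H vw(2) x(2)] False by simp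
  qed
  obtain s1 t1 where b1: "s1 \<le> t1" "blk H v = {s1..t1}" using iv[OF blk_props(1)[OF H vw(1)]] by metis
  obtain s2 t2 where b2: "s2 \<le> t2" "blk H w = {s2..t2}" using iv[OF blk_props(1)[OF H vw(2)]] by metis
  have "v \<in> {s1..t1}" "w \<in> {s2..t2}" using b1 b2 blk_props(2)[OF H] vw by metis+
  hence "t1 < s2" using disj b1 b2 vw(3) by (auto simp: disjoint_iff)
  thus ?thesis unfolding rep_def using b1 b2 by simp
qed

lemma rep_less: "H \<in> I \<Longrightarrow> v \<in> H \<Longrightarrow> w \<in> H \<Longrightarrow> rep H v < rep H w \<Longrightarrow> v < w"
  using rep_le by (meson leD le_less_linear)

end


context nice
begin

lemma sing_eq: "H = {a} \<Longrightarrow> x \<in> H \<Longrightarrow> x = a" by simp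

lemma acI: "acyclic_orientation I Or \<Longrightarrow> H \<in> I \<Longrightarrow> Or H \<in> H"
  unfolding acyclic_orientation_def orientation_def by blast

lemma pw_of_rep:
  assumes a1: "acyclic_orientation I O1" and a2: "acyclic_orientation I O2"
    and r: "\<forall>H\<in>I. rep H (O1 H) \<le> rep H (O2 H)"
  shows "H \<in> I \<Longrightarrow> O1 H \<le> O2 H"
proof (induction "card H" arbitrary: H rule: less_induct)
  case less
  have H: "H \<in> I" by fact
  have v1: "O1 H \<in> H" and v2: "O2 H \<in> H" using acI a1 a2 H by auto
  show ?case
  proof (cases "rep H (O1 H) < rep H (O2 H)")
    case True thus ?thesis using rep_less[OF H v1 v2] by simp
  next
    case False
    hence eq: "rep H (O1 H) = rep H (O2 H)" using r H by force
    hence bb: "blk H (O1 H) = blk H (O2 H)" using rep_eq_blk[OF H v1 v2] by simp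
    show ?thesis
    proof (cases "blk H (O1 H) = H")
      case True
      hence "H = {O1 H}" using blk_props(5)[OF H v1] by simp
      hence "O2 H = O1 H" by (rule sing_eq) (rule v2)
      thus ?thesis by simp
    next
      case False
      let ?B = "blk H (O1 H)"
      have B: "?B \<in> I" "?B \<subset> H" using blk_props(1,3)[OF H v1] False by auto
      have i1: "O1 H \<in> ?B" using blk_props(2)[OF H v1] .
      have i2: "O2 H \<in> ?B" using blk_props(2)[OF H v2] bb by simp
      have e1: "O1 H = O1 ?B" using acyc_cons[OF ih a1 H B(1) _ i1] B by auto
      have e2: "O2 H = O2 ?B" using acyc_cons[OF ih a2 H B(1) _ i2] B by auto
      have "card ?B < card H" using psubset_card_mono[OF finH[OF H] B(2)] .
      hence "O1 ?B \<le> O2 ?B" using less.hyps B(1) by blast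
      thus ?thesis using e1 e2 by simp
    qed
  qed
qed

lemma pw_to_P_le:
  assumes a2: "acyclic_orientation I O2"
  shows "acyclic_orientation I O1 \<Longrightarrow> \<forall>H\<in>I. O1 H \<le> O2 H \<Longrightarrow> P_le n I O1 O2"
proof (induction "\<Sum>H\<in>I. O2 H - O1 H" arbitrary: O1 rule: less_induct)
  case less
  have a1: "acyclic_orientation I O1" and pw: "\<forall>H\<in>I. O1 H \<le> O2 H" by fact+
  have or1: "orientation I O1" and or2: "orientation I O2" using a1 a2 unfolding acyclic_orientation_def by auto
  show ?case
  proof (cases "O1 = O2")
    case True thus ?thesis using P_le_refl[OF a1] by simp
  next
    case False
    hence "\<exists>H. H \<in> I \<and> O1 H \<noteq> O2 H" using orientation_eqI[OF or1 or2] by blast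
    then obtain H0 where "H0 \<in> I \<and> O1 H0 \<noteq> O2 H0" by blast
    then obtain H where Hm: "H \<in> I \<and> O1 H \<noteq> O2 H" and Hmin: "\<forall>K. K \<in> I \<and> O1 K \<noteq> O2 K \<longrightarrow> card H \<le> card K"
      using ex_has_least_nat[of "\<lambda>K. K \<in> I \<and> O1 K \<noteq> O2 K" H0 card] by blast
    have H: "H \<in> I" and neH: "O1 H \<noteq> O2 H" using Hm by auto
    define i where "i = O1 H"
    have iH: "i \<in> H" using acI[OF a1 H] i_def by simp
    have o2H: "O2 H \<in> H" using acI[OF a2 H] .
    have ilt: "i < O2 H" using pw H neH i_def by force
    define B where "B = blk H i"
    have BI: "B \<in> I" and iB: "i \<in> B" and BH: "B \<subseteq> H" using blk_props[OF H iH] B_def by auto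
    have o2B: "O2 H \<notin> B"
    proof
      assume inB: "O2 H \<in> B"
      show False
      proof (cases "B = H")
        case True
        hence "H = {i}" using blk_props(5)[OF H iH] B_def by simp
        hence "O2 H = i" by (rule sing_eq) (rule o2H)
        thus False using ilt by simp
      next
        case False
        hence Bs: "B \<subset> H" using BH by auto
        have e1: "O1 B = i" using acyc_cons[OF ih a1 H BI BH] iB i_def by simp
        have "card B < card H" using psubset_card_mono[OF finH[OF H] Bs] .
        hence "O1 B = O2 B" using Hmin BI by force
        moreover have "O2 H = O2 B" using acyc_cons[OF ih a2 H BI BH inB] .
        ultimately show False using e1 ilt by simp
      qed
    qed
    obtain x y where xy: "x \<le> y" "B = {x..y}" using iv[OF BI] by metis
    obtain s t where st: "1 \<le> s" "s \<le> t" "t \<le> n" "H = {s..t}" using iv[OF H] by metis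
    have yo: "y < O2 H" using o2B xy iB ilt by auto
    define m where "m = Suc y"
    have mH: "m \<in> H" using st xy BH yo o2H m_def by auto
    define D where "D = blk H m"
    have DI: "D \<in> I" and mD: "m \<in> D" and DH: "D \<subseteq> H" using blk_props[OF H mH] D_def by auto
    have DB: "D \<inter> B = {}"
    proof (rule ccontr)
      assume "D \<inter> B \<noteq> {}"
      then obtain z where z: "z \<in> D" "z \<in> B" by blast
      have "blk H z = D" using blk_same[OF H mH] z D_def by simp
      moreover have "blk H z = B" using blk_same[OF H iH] z B_def by simp
      ultimately show False using mD xy m_def by auto
    qed
    obtain x2 y2 where xy2: "x2 \<le> y2" "D = {x2..y2}" using iv[OF DI] by metis
    have x2: "y < x2"
    proof (rule ccontr)
      assume "\<not> y < x2"
      hence "y \<in> D" using xy2 mD m_def by auto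
      moreover have "y \<in> B" using xy by auto
      ultimately show False using DB by blast
    qed
    define j where "j = O1 D"
    have jD: "j \<in> D" using acI[OF a1 DI] j_def by simp
    have jH: "j \<in> H" using jD DH by auto
    have ij: "i < j" using jD xy2 x2 iB xy by auto
    have jo: "j \<le> O2 H"
    proof (cases "O2 H \<in> D")
      case True
      have "O2 H = O2 D" using acyc_cons[OF ih a2 H DI DH True] .
      thus ?thesis using pw DI j_def by simp
    next
      case False
      thus ?thesis using jD xy2 x2 yo mD m_def by auto
    qed
    have blkj: "blk H j = D" using blk_same[OF H mH] jD D_def by simp
    have clA: "\<And>K. K \<in> I \<Longrightarrow> i \<in> K \<Longrightarrow> j \<in> K \<Longrightarrow> H \<subseteq> K"
    proof -
      fix K assume K: "K \<in> I" "i \<in> K" "j \<in> K"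
      show "H \<subseteq> K"
      proof (rule ccontr)
        assume nHK: "\<not> H \<subseteq> K"
        show False
        proof (cases "K \<subseteq> H")
          case True
          hence "K \<subset> H" using nHK by auto
          hence "K \<subseteq> B" using blk_props(4)[OF H iH K(1) _ K(2)] B_def by simp
          thus False using K(3) jD DB by auto
        next
          case False
          have W: "H \<inter> K \<in> I" using cross[OF H K(1) nHK False, of i j] iH jH K ij by auto
          have "H \<inter> K \<subset> H" using nHK by auto
          hence "H \<inter> K \<subseteq> B" using blk_props(4)[OF H iH W] iH K B_def by simp
          thus False using K(3) jH jD DB by auto
        qed
      qed
    qed
    define O3 where "O3 = (\<lambda>K. if K \<in> I \<and> O1 K = i \<and> j \<in> K then j else O1 K)"
    have chg: "\<And>K. K \<in> I \<Longrightarrow> O1 K = i \<Longrightarrow> j \<in> K \<Longrightarrow> H \<subseteq> K"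
      using clA acI[OF a1] by metis
    have or3: "orientation I O3"
      using or1 unfolding orientation_def O3_def by auto
    have cons3: "\<And>K K'. K \<in> I \<Longrightarrow> K' \<in> I \<Longrightarrow> K' \<subseteq> K \<Longrightarrow> O3 K \<in> K' \<Longrightarrow> O3 K = O3 K'"
    proof -
      fix K K' assume KK: "K \<in> I" "K' \<in> I" "K' \<subseteq> K" "O3 K \<in> K'"
      show "O3 K = O3 K'"
      proof (cases "O1 K = i \<and> j \<in> K")
        case True
        have O3K: "O3 K = j" using True KK unfolding O3_def by simp
        hence jK': "j \<in> K'" using KK by simp
        have HK: "H \<subseteq> K" using chg KK(1) True by blast
        show ?thesis
        proof (cases "H \<subseteq> K'")
          case True
          hence "O1 K \<in> K'" using \<open>O1 K = i \<and> j \<in> K\<close> iH by auto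
          hence "O1 K = O1 K'" using acyc_cons[OF ih a1 KK(1,2,3)] by simp
          hence "O1 K' = i" using \<open>O1 K = i \<and> j \<in> K\<close> by simp
          thus ?thesis using O3K jK' KK(2) unfolding O3_def by simp
        next
          case nH: False
          show ?thesis
          proof (cases "K' \<subseteq> H")
            case True
            hence K's: "K' \<subset> H" using nH by auto
            have "K' \<subseteq> D" using blk_props(4)[OF H jH KK(2) K's jK'] blkj by simp
            hence "O1 D = O1 K'" using acyc_cons[OF ih a1 DI KK(2)] jK' j_def by simp
            hence "O1 K' = j" using j_def by simp
            hence "O3 K' = j" using ij unfolding O3_def by auto
            thus ?thesis using O3K by simp
          next
            case False
            have "H \<subseteq> K' \<or> K' \<subseteq> H" using nest[OF H KK(2,1) HK KK(3)] jH jK' by blast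
            thus ?thesis using False nH by simp
          qed
        qed
      next
        case False
        hence O3K: "O3 K = O1 K" unfolding O3_def by auto
        have c1: "O1 K = O1 K'" using acyc_cons[OF ih a1 KK(1,2,3)] KK(4) O3K by simp
        have "\<not> (O1 K' = i \<and> j \<in> K')" using False c1 KK(3) by auto
        hence "O3 K' = O1 K'" unfolding O3_def by auto
        thus ?thesis using O3K c1 by simp
      qed
    qed
    have a3: "acyclic_orientation I O3" using nice_acyclic[OF or3 cons3] by blast
    have pw3: "\<forall>K\<in>I. O3 K \<le> O2 K"
    proof
      fix K assume K: "K \<in> I"
      show "O3 K \<le> O2 K"
      proof (cases "O1 K = i \<and> j \<in> K")
        case True
        have HK: "H \<subseteq> K" using chg K True by blast
        have "O3 K = j" using True K unfolding O3_def by simp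
        moreover have "j \<le> O2 K"
        proof (cases "O2 K \<in> H")
          case True
          thus ?thesis using acyc_cons[OF ih a2 K H HK True] jo by simp
        next
          case False
          have "i \<le> O2 K" using pw K True by force
          thus ?thesis using False st iH jH by auto
        qed
        ultimately show ?thesis by simp
      next
        case False
        thus ?thesis using pw K unfolding O3_def by auto
      qed
    qed
    have O3H: "O3 H = j" using H jH i_def unfolding O3_def by simp
    have ne13: "O1 \<noteq> O3" using O3H ij i_def by (metis less_irrefl)
    have rng: "1 \<le> i" "i < j" "j \<le> n" using iH jH st ij by auto
    have body: "\<forall>K\<in>I. (O1 K \<noteq> O3 K \<longrightarrow> O1 K = i \<and> O3 K = j) \<and> ({i, j} \<subseteq> K \<longrightarrow> (O1 K = i) = (O3 K = j))"
    proof (intro ballI conjI)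
      fix K assume K: "K \<in> I"
      show "O1 K \<noteq> O3 K \<longrightarrow> O1 K = i \<and> O3 K = j" unfolding O3_def by auto
      show "{i, j} \<subseteq> K \<longrightarrow> (O1 K = i) = (O3 K = j)"
      proof
        assume ijK: "{i, j} \<subseteq> K"
        show "(O1 K = i) = (O3 K = j)"
        proof
          assume "O1 K = i" thus "O3 K = j" using ijK K unfolding O3_def by simp
        next
          assume "O3 K = j"
          show "O1 K = i"
          proof (rule ccontr)
            assume ne: "O1 K \<noteq> i"
            hence "O1 K = j" using \<open>O3 K = j\<close> unfolding O3_def by (auto split: if_splits)
            have "H \<subseteq> K" using clA K ijK by auto
            hence "O1 K = O1 H" using acyc_cons[OF ih a1 K H] \<open>O1 K = j\<close> jH by simp
            thus False using ne i_def by simp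
          qed
        qed
      qed
    qed
    have fl: "increasing_flip n I O1 O3"
      unfolding increasing_flip_def using ne13 rng body by blast
    have st1: "P_le n I O1 O3" using flip_step[OF a1 a3 fl] .
    have le13: "\<forall>K\<in>I. O1 K \<le> O3 K" using ij unfolding O3_def by auto
    have "(\<Sum>K\<in>I. O2 K - O3 K) < (\<Sum>K\<in>I. O2 K - O1 K)"
    proof (rule sum_strict_mono_ex1[OF finI])
      show "\<forall>K\<in>I. O2 K - O3 K \<le> O2 K - O1 K" using le13 by (simp add: diff_le_mono2)
      show "\<exists>K\<in>I. O2 K - O3 K < O2 K - O1 K"
        using H O3H ij jo i_def by (intro bexI[of _ H]) auto
    qed
    hence "P_le n I O3 O2" using less.hyps a3 pw3 by blast
    thus ?thesis using P_le_trans[OF st1] by blast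
  qed
qed

end


context nice
begin

lemma sub_sing: "K \<subseteq> H \<Longrightarrow> H = {a} \<Longrightarrow> x \<in> K \<Longrightarrow> K = H" by auto

function bld :: "(nat set \<Rightarrow> nat) \<Rightarrow> nat set \<Rightarrow> nat" where
  "bld G H = (if H \<in> I \<and> G H \<in> H \<and> blk H (G H) \<subset> H then bld G (blk H (G H)) else G H)"
  by auto
termination
proof (relation "measure (\<lambda>(G,H). card H)")
  show "wf (measure (\<lambda>(G, H). card H))" by simp
  fix G H assume a: "H \<in> I \<and> G H \<in> H \<and> blk H (G H) \<subset> H"
  thus "((G, blk H (G H)), G, H) \<in> measure (\<lambda>(G, H). card H)"
    using psubset_card_mono[OF finH] by simp
qed

declare bld.simps [simp del]

lemma bld_props:
  assumes vG: "\<forall>K\<in>I. G K \<in> rep K ` K"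
  shows "H \<in> I \<Longrightarrow> bld G H \<in> blk H (G H) \<and> (\<forall>K\<in>I. K \<subseteq> H \<longrightarrow> bld G H \<in> K \<longrightarrow> bld G H = bld G K)"
proof (induction "card H" arbitrary: H rule: less_induct)
  case less
  have H: "H \<in> I" by fact
  obtain v where v: "v \<in> H" "G H = rep H v" using vG H by blast
  have GH: "G H \<in> H" using rep_H[OF H v(1)] v(2) by simp
  let ?B = "blk H (G H)"
  have BI: "?B \<in> I" and gB: "G H \<in> ?B" and BH: "?B \<subseteq> H" using blk_props[OF H GH] by auto
  show ?case
  proof (cases "?B \<subset> H")
    case True
    have eq: "bld G H = bld G ?B" using bld.simps[of G H] H GH True by simp
    have "card ?B < card H" using psubset_card_mono[OF finH[OF H] True] .
    note IH = less.hyps[OF this BI]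
    have p1': "bld G ?B \<in> blk ?B (G ?B)" using IH by blast
    have "bld G ?B \<in> ?B"
    proof -
      obtain w where w: "w \<in> ?B" "G ?B = rep ?B w" using vG BI by blast
      have "G ?B \<in> ?B" using rep_H[OF BI w(1)] w(2) by simp
      thus ?thesis using p1' blk_props(3)[OF BI] by blast
    qed
    hence P1: "bld G H \<in> ?B" using eq by simp
    have "\<forall>K\<in>I. K \<subseteq> H \<longrightarrow> bld G H \<in> K \<longrightarrow> bld G H = bld G K"
    proof (intro ballI impI)
      fix K assume K: "K \<in> I" "K \<subseteq> H" "bld G H \<in> K"
      show "bld G H = bld G K"
      proof (cases "K = H")
        case True thus ?thesis by simp
      next
        case False
        hence Ks: "K \<subset> H" using K by auto
        have bH: "bld G H \<in> H" using P1 BH by auto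
        have "K \<subseteq> blk H (bld G H)" using blk_props(4)[OF H bH K(1) Ks K(3)] .
        moreover have "blk H (bld G H) = ?B" using blk_same[OF H GH P1] .
        ultimately have "K \<subseteq> ?B" by simp
        moreover have "bld G ?B \<in> K" using K(3) eq by simp
        ultimately have "bld G ?B = bld G K" using IH K(1) by blast
        thus ?thesis using eq by simp
      qed
    qed
    thus ?thesis using P1 by blast
  next
    case False
    hence BeqH: "?B = H" using BH by auto
    have eq: "bld G H = G H" using bld.simps[of G H] False by auto
    have Hs: "H = {G H}" using blk_props(5)[OF H GH] BeqH by simp
    have "\<forall>K\<in>I. K \<subseteq> H \<longrightarrow> bld G H \<in> K \<longrightarrow> bld G H = bld G K"
    proof (intro ballI impI)
      fix K assume K: "K \<in> I" "K \<subseteq> H" "bld G H \<in> K"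
      have "G H \<in> K" using K(3) eq by simp
      hence "K = H" using sub_sing[OF K(2) Hs] by blast
      thus "bld G H = bld G K" by simp
    qed
    thus ?thesis using eq gB by simp
  qed
qed

lemma bld_rep:
  assumes vG: "\<forall>K\<in>I. G K \<in> rep K ` K" and H: "H \<in> I"
  shows "rep H (bld G H) = G H"
proof -
  obtain v where v: "v \<in> H" "G H = rep H v" using vG H by blast
  have GH: "G H \<in> H" using rep_H[OF H v(1)] v(2) by simp
  have b: "bld G H \<in> blk H (G H)" using bld_props[OF vG H] by blast
  have "blk H (bld G H) = blk H (G H)" using blk_same[OF H GH b] .
  hence "rep H (bld G H) = rep H (G H)" unfolding rep_def by simp
  also have "\<dots> = G H" using rep_rep[OF H v(1)] v(2) by simp
  finally show ?thesis .
qed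

lemma bld_acyclic:
  assumes vG: "\<forall>K\<in>I. G K \<in> rep K ` K"
  shows "acyclic_orientation I (\<lambda>K. if K \<in> I then bld G K else undefined)" (is "acyclic_orientation I ?O")
proof (rule nice_acyclic)
  show "orientation I ?O"
    unfolding orientation_def
  proof (intro conjI ballI allI impI)
    fix H assume H: "H \<in> I"
    obtain v where v: "v \<in> H" "G H = rep H v" using vG H by blast
    have GH: "G H \<in> H" using rep_H[OF H v(1)] v(2) by simp
    have "bld G H \<in> H" using bld_props[OF vG H] blk_props(3)[OF H GH] by blast
    thus "?O H \<in> H" using H by simp
  qed simp
  fix H K assume HK: "H \<in> I" "K \<in> I" "K \<subseteq> H" "?O H \<in> K"
  thus "?O H = ?O K" using bld_props[OF vG HK(1)] by simp
qed

end


lemma Max_iv [simp]: "(s::nat) \<le> t \<Longrightarrow> Max {s..t} = t"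
  by (simp add: Max_eq_iff)

lemma chain_nat: "chain_on (S::nat set) (\<le>)"
  unfolding chain_on_def partial_order_on'_def by auto

context nice
begin

lemma nice_iso: "iso_product_of_chains (P_carrier I) (P_le n I)"
proof -
  define enc where "enc = (\<lambda>H::nat set. Min H * Suc n + Max H)"
  have injE: "inj_on enc I"
  proof (rule inj_onI)
    fix H K assume HK: "H \<in> I" "K \<in> I" "enc H = enc K"
    obtain s t where h: "s \<le> t" "H = {s..t}" using iv[OF HK(1)] by metis
    obtain s' t' where k: "s' \<le> t'" "K = {s'..t'}" using iv[OF HK(2)] by metis
    have tn: "t \<le> n" "t' \<le> n" using iv[OF HK(1)] iv[OF HK(2)] h k
      by (metis atLeastAtMost_iff atLeastatMost_empty_iff2 atLeastatMost_subset_iff order_refl)+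
    have e: "s * Suc n + t = s' * Suc n + t'" using HK(3) h k unfolding enc_def by simp
    have e': "t + s * Suc n = t' + s' * Suc n" using e by (metis add.commute)
    have d1: "(t + s * Suc n) div Suc n = s" using tn(1) by (subst div_mult_self1) auto
    have d2: "(t' + s' * Suc n) div Suc n = s'" using tn(2) by (subst div_mult_self1) auto
    have m1: "(t + s * Suc n) mod Suc n = t" using tn(1) by (subst mod_mult_self1) auto
    have m2: "(t' + s' * Suc n) mod Suc n = t'" using tn(2) by (subst mod_mult_self1) auto
    have "s = s'" "t = t'" using e' d1 d2 m1 m2 by metis+
    thus "H = K" using h k by simp
  qed
  define J where "J = enc ` I"
  define dec where "dec = inv_into I enc"
  have dec_enc: "\<And>H. H \<in> I \<Longrightarrow> dec (enc H) = H" using inv_into_f_f[OF injE] dec_def by simp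
  have decI: "\<And>j. j \<in> J \<Longrightarrow> dec j \<in> I" unfolding J_def dec_def using dec_enc dec_def by auto
  define C where "C = (\<lambda>j. rep (dec j) ` dec j)"
  define R where "R = (\<lambda>(j::nat) (a::nat) (b::nat). a \<le> b)"
  define f where "f = (\<lambda>Or. \<lambda>j\<in>J. rep (dec j) (Or (dec j)))"
  let ?A = "P_carrier I"
  have fenc: "\<And>Or H. H \<in> I \<Longrightarrow> f Or (enc H) = rep H (Or H)"
    unfolding f_def J_def using dec_enc by simp
  have acA: "\<And>Or. Or \<in> ?A \<Longrightarrow> acyclic_orientation I Or" unfolding P_carrier_def by simp
  have iso: "\<forall>x\<in>?A. \<forall>y\<in>?A. P_le n I x y \<longleftrightarrow> (\<forall>j\<in>J. R j (f x j) (f y j))"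
  proof (intro ballI)
    fix x y assume xy: "x \<in> ?A" "y \<in> ?A"
    have ax: "acyclic_orientation I x" and ay: "acyclic_orientation I y" using acA xy by auto
    have eqv: "(\<forall>j\<in>J. R j (f x j) (f y j)) \<longleftrightarrow> (\<forall>H\<in>I. rep H (x H) \<le> rep H (y H))"
      unfolding J_def R_def using fenc by auto
    show "P_le n I x y \<longleftrightarrow> (\<forall>j\<in>J. R j (f x j) (f y j))"
    proof
      assume le: "P_le n I x y"
      have "\<forall>H\<in>I. rep H (x H) \<le> rep H (y H)"
        using P_le_pw(3)[OF le] rep_le acI[OF ax] acI[OF ay] by blast
      thus "\<forall>j\<in>J. R j (f x j) (f y j)" using eqv by simp
    next
      assume "\<forall>j\<in>J. R j (f x j) (f y j)"
      hence "\<forall>H\<in>I. rep H (x H) \<le> rep H (y H)" using eqv by simp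
      hence "\<forall>H\<in>I. x H \<le> y H" using pw_of_rep[OF ax ay] by blast
      thus "P_le n I x y" using pw_to_P_le[OF ay ax] by blast
    qed
  qed
  have inj: "inj_on f ?A"
  proof (rule inj_onI)
    fix x y assume xy: "x \<in> ?A" "y \<in> ?A" "f x = f y"
    have ax: "acyclic_orientation I x" and ay: "acyclic_orientation I y" using acA xy by auto
    have r: "\<forall>H\<in>I. rep H (x H) = rep H (y H)" using xy(3) fenc by metis
    have "\<forall>H\<in>I. x H \<le> y H" using pw_of_rep[OF ax ay] r by simp
    moreover have "\<forall>H\<in>I. y H \<le> x H" using pw_of_rep[OF ay ax] r by simp
    ultimately have "\<forall>H\<in>I. x H = y H" using antisym by blast
    thus "x = y" using orientation_eqI ax ay unfolding acyclic_orientation_def by blast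
  qed
  have sub1: "f ` ?A \<subseteq> Pi\<^sub>E J C"
  proof
    fix g assume "g \<in> f ` ?A"
    then obtain x where x: "x \<in> ?A" "g = f x" by blast
    have ax: "acyclic_orientation I x" using acA x by simp
    show "g \<in> Pi\<^sub>E J C"
      unfolding x(2) f_def C_def using decI acI[OF ax] by auto
  qed
  have sub2: "Pi\<^sub>E J C \<subseteq> f ` ?A"
  proof
    fix g assume g: "g \<in> Pi\<^sub>E J C"
    define G where "G = (\<lambda>H. g (enc H))"
    have vG: "\<forall>K\<in>I. G K \<in> rep K ` K"
    proof
      fix K assume K: "K \<in> I"
      have "enc K \<in> J" using K J_def by simp
      hence "g (enc K) \<in> C (enc K)" using g by auto
      thus "G K \<in> rep K ` K" unfolding G_def C_def using dec_enc K by simp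
    qed
    define Ob where "Ob = (\<lambda>K. if K \<in> I then bld G K else undefined)"
    have aOb: "acyclic_orientation I Ob" unfolding Ob_def using bld_acyclic[OF vG] .
    have "f Ob = g"
    proof
      fix j show "f Ob j = g j"
      proof (cases "j \<in> J")
        case True
        then obtain H where H: "H \<in> I" "j = enc H" unfolding J_def by blast
        have "f Ob j = rep H (Ob H)" using fenc H by simp
        also have "\<dots> = G H" unfolding Ob_def using bld_rep[OF vG H(1)] H(1) by simp
        finally show ?thesis using H G_def by simp
      next
        case False
        have "g j = undefined" using PiE_arb[OF g False] .
        moreover have "f Ob j = undefined" unfolding f_def using False by simp
        ultimately show ?thesis by simp
      qed
    qed
    moreover have "Ob \<in> ?A" using aOb unfolding P_carrier_def by simp
    ultimately show "g \<in> f ` ?A" by blast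
  qed
  have bij: "bij_betw f ?A (Pi\<^sub>E J C)" unfolding bij_betw_def using inj sub1 sub2 by blast
  have finJ: "finite J" using finI J_def by simp
  have ch: "\<forall>j\<in>J. chain_on (C j) (R j)" unfolding R_def using chain_nat by simp
  have "finite J \<and> (\<forall>j\<in>J. chain_on (C j) (R j)) \<and> bij_betw f ?A (Pi\<^sub>E J C) \<and>
        (\<forall>x\<in>?A. \<forall>y\<in>?A. P_le n I x y \<longleftrightarrow> (\<forall>j\<in>J. R j (f x j) (f y j)))"
    using finJ ch bij iso by blast
  thus ?thesis unfolding iso_product_of_chains_def by blast
qed

end


theorem corollary5p32:
  fixes n :: nat and I :: "nat set set"
  assumes "interval_hypergraph n I"
  shows "distributive_lattice_on (P_carrier I) (P_le n I) \<longleftrightarrow>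
         iso_product_of_chains (P_carrier I) (P_le n I)"
proof
  assume dl: "distributive_lattice_on (P_carrier I) (P_le n I)"
  have lat: "lattice_on (P_carrier I) (P_le n I)" using dl unfolding distributive_lattice_on_def by blast
  have "nice n I"
  proof
    show "interval_hypergraph n I" by fact
    fix a b c d assume "{a..b} \<in> I" "{c..d} \<in> I" "a < c" "c < b" "b < d"
    thus "{c..b} \<in> I" using obsA_not_lattice[OF assms] lat by blast
  next
    fix a b c d Z assume "{a..b} \<in> I" "{c..d} \<in> I" "Z \<in> I" "a < c" "c \<le> b" "b < d" "{a..d} \<subseteq> Z"
    thus False using obsB_not_dist[OF assms] dl by blast
  qed
  thus "iso_product_of_chains (P_carrier I) (P_le n I)" using nice.nice_iso by blast
next
  assume "iso_product_of_chains (P_carrier I) (P_le n I)"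
  thus "distributive_lattice_on (P_carrier I) (P_le n I)" by (rule prod_chains_distrib)
qed


end
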